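(* Let $T=(V,E,F)$ be a triangulated surface and $\phi:|T|\to\mathbb C$ a geodesic homeomorphism whose induced PL metric $l$ is uniformly nondegenerate and Delaunay. Define $\mu\in\mathbb R_{\ge0}^E$ by $\mu_{ij}=\frac12(\cot\theta^{k_1}_{ij}+\cot\theta^{k_2}_{ij})$, where $\triangle ijk_1,\triangle ijk_2$ are the two triangles adjacent to the edge $ij$. If $u:V\to\mathbb R$ is bounded and $\sum_{j:ij\in E}\mu_{ij}(u_j-u_i)=0$ for every $i\in V$, then $u$ is constant.
   Context: $\theta^i_{jk}$ is the inner angle at $\phi(i)$ of the image triangle $\phi(\triangle ijk)$. $l$ is uniformly nondegenerate if there is $\epsilon>0$ with all $\theta^i_{jk}\ge\epsilon$, and Delaunay if $\theta^{k_1}_{ij}+\theta^{k_2}_{ij}\le\pi$ for every pair of adjacent triangles (hence $\mu_{ij}\ge0$). A geodesic homeomorphism $\phi:|T|\to\mathbb C$ maps each edge to the straight segment between the images of its endpoints and maps $|T|$ homeomorphically onto $\mathbb C$; it induces $l_{ij}=|\phi(i)-\phi(j)|$. *)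

theory Defs
  imports "HOL-Analysis.Analysis"
begin

text \<open>Combinatorial triangulated surface (without boundary) T = (V,E,F):
  faces are 3-element vertex sets, every vertex lies in a face, every edge lies
  in exactly two faces, every vertex star is finite and its link is connected
  (hence a single cycle).\<close>

definition tri_edges :: "'v set set \<Rightarrow> 'v set set" where
  "tri_edges F = {e. card e = 2 \<and> (\<exists>f\<in>F. e \<subseteq> f)}"

definition link_rel :: "'v set set \<Rightarrow> 'v \<Rightarrow> 'v \<Rightarrow> 'v \<Rightarrow> bool" where
  "link_rel F v j k \<longleftrightarrow> {v, j, k} \<in> F \<and> j \<noteq> k \<and> j \<noteq> v \<and> k \<noteq> v"

definition link_vertices :: "'v set set \<Rightarrow> 'v \<Rightarrow> 'v set" where
  "link_vertices F v = {j. \<exists>k. link_rel F v j k}"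

definition tri_surface :: "'v set \<Rightarrow> 'v set set \<Rightarrow> bool" where
  "tri_surface V F \<longleftrightarrow>
     (\<forall>f\<in>F. f \<subseteq> V \<and> card f = 3) \<and>
     (\<forall>v\<in>V. \<exists>f\<in>F. v \<in> f) \<and>
     (\<forall>e\<in>tri_edges F. card {f\<in>F. e \<subseteq> f} = 2) \<and>
     (\<forall>v\<in>V. finite {f\<in>F. v \<in> f}) \<and>
     (\<forall>v\<in>V. \<forall>j\<in>link_vertices F v. \<forall>k\<in>link_vertices F v. (link_rel F v)\<^sup>*\<^sup>* j k)"

text \<open>Geodesic homeomorphism |T| \<rightarrow> C, described by the images p of the vertices:
  every face maps onto the (nondegenerate) straight triangle spanned by its vertex images,
  distinct simplices meet exactly in the image of their common face, the triangles cover C,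
  and the triangulation is locally finite (needed for a homeomorphism onto C).\<close>

definition geodesic_homeo :: "'v set \<Rightarrow> 'v set set \<Rightarrow> ('v \<Rightarrow> complex) \<Rightarrow> bool" where
  "geodesic_homeo V F p \<longleftrightarrow>
     inj_on p V \<and>
     (\<forall>f\<in>F. \<not> collinear (p ` f)) \<and>
     (\<forall>f\<in>F. \<forall>g\<in>F. convex hull (p ` f) \<inter> convex hull (p ` g) = convex hull (p ` (f \<inter> g))) \<and>
     (\<Union>f\<in>F. convex hull (p ` f)) = UNIV \<and>
     (\<forall>K. compact K \<longrightarrow> finite {f\<in>F. convex hull (p ` f) \<inter> K \<noteq> {}})"

definition inner_angle :: "complex \<Rightarrow> complex \<Rightarrow> complex \<Rightarrow> real" where
  "inner_angle a b c = arccos (((b - a) \<bullet> (c - a)) / (norm (b - a) * norm (c - a)))"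

definition theta :: "('v \<Rightarrow> complex) \<Rightarrow> 'v \<Rightarrow> 'v \<Rightarrow> 'v \<Rightarrow> real" where
  "theta p i j k = inner_angle (p i) (p j) (p k)"

definition unif_nondegenerate :: "'v set set \<Rightarrow> ('v \<Rightarrow> complex) \<Rightarrow> bool" where
  "unif_nondegenerate F p \<longleftrightarrow>
     (\<exists>\<epsilon>>0. \<forall>i j k. {i, j, k} \<in> F \<and> card {i, j, k} = 3 \<longrightarrow> theta p i j k \<ge> \<epsilon>)"

definition delaunay :: "'v set set \<Rightarrow> ('v \<Rightarrow> complex) \<Rightarrow> bool" where
  "delaunay F p \<longleftrightarrow>
     (\<forall>i j k1 k2. {i, j, k1} \<in> F \<and> {i, j, k2} \<in> F \<and> card {i, j, k1} = 3 \<and> card {i, j, k2} = 3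
        \<and> k1 \<noteq> k2 \<longrightarrow> theta p k1 i j + theta p k2 i j \<le> pi)"

definition cot_weight :: "'v set set \<Rightarrow> ('v \<Rightarrow> complex) \<Rightarrow> 'v \<Rightarrow> 'v \<Rightarrow> real" where
  "cot_weight F p i j = (1/2) * (\<Sum>k\<in>{k. {i, j, k} \<in> F \<and> k \<noteq> i \<and> k \<noteq> j}. cot (theta p k i j))"

definition nbrs :: "'v set set \<Rightarrow> 'v \<Rightarrow> 'v set" where
  "nbrs F i = {j. {i, j} \<in> tri_edges F}"

end

theory Submission
  imports Defs
begin

definition cr :: "complex \<Rightarrow> complex \<Rightarrow> real" where
  "cr z w = Re z * Im w - Im z * Re w"

lemma lagrange: "(z \<bullet> w)^2 + (cr z w)^2 = (cmod z)^2 * (cmod w)^2"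
  unfolding cr_def inner_complex_def cmod_power2 by algebra

lemma cr_abs_cyc1: "\<bar>cr (c - b) (a - b)\<bar> = \<bar>cr (b - a) (c - a)\<bar>"
  unfolding cr_def by (simp add: algebra_simps)
lemma cr_abs_swap: "\<bar>cr (c - a) (b - a)\<bar> = \<bar>cr (b - a) (c - a)\<bar>"
  unfolding cr_def by (simp add: algebra_simps)
lemma cr_abs_cyc2: "\<bar>cr (a - c) (b - c)\<bar> = \<bar>cr (b - a) (c - a)\<bar>"
  unfolding cr_def by (simp add: algebra_simps)
lemma cr_le: "\<bar>cr z w\<bar> \<le> cmod z * cmod w"
proof -
  have "(cr z w)^2 \<le> (cmod z * cmod w)^2" using lagrange[of z w]
    by (simp add: power_mult_distrib) (smt (verit) zero_le_power2)
  hence "\<bar>cr z w\<bar> \<le> \<bar>cmod z * cmod w\<bar>" by (simp only: abs_le_square_iff)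
  thus ?thesis by simp
qed

lemma ia_facts:
  assumes X: "cr (b - a) (c - a) \<noteq> 0"
  shows "cos (inner_angle a b c) = ((b - a) \<bullet> (c - a)) / (cmod (b - a) * cmod (c - a))"
    and "sin (inner_angle a b c) = \<bar>cr (b - a) (c - a)\<bar> / (cmod (b - a) * cmod (c - a))"
    and "cot (inner_angle a b c) = ((b - a) \<bullet> (c - a)) / \<bar>cr (b - a) (c - a)\<bar>"
    and "0 \<le> inner_angle a b c" "inner_angle a b c \<le> pi"
proof -
  define P where "P = b - a"
  define Q where "Q = c - a"
  have XP: "cr P Q \<noteq> 0" using X by (simp add: P_def Q_def)
  have P0: "P \<noteq> 0" using XP by (auto simp: cr_def)
  have Q0: "Q \<noteq> 0" using XP by (auto simp: cr_def)
  define n where "n = cmod P * cmod Q"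
  have n0: "n > 0" using P0 Q0 by (simp add: n_def)
  define t where "t = (P \<bullet> Q) / n"
  have lag: "(P \<bullet> Q)^2 + (cr P Q)^2 = n^2" using lagrange[of P Q] by (simp add: n_def power_mult_distrib)
  have t2: "1 - t^2 = (cr P Q / n)^2" using lag n0 by (simp add: t_def power_divide field_simps)
  have "t^2 \<le> 1" using t2 by (smt (verit) zero_le_power2)
  hence tb: "-1 \<le> t" "t \<le> 1" proof -
    have "\<bar>t\<bar> \<le> 1" using \<open>t^2 \<le> 1\<close> by (simp only: abs_square_le_1)
    thus "-1 \<le> t" "t \<le> 1" by simp_all
  qed
  have ia: "inner_angle a b c = arccos t" by (simp add: inner_angle_def t_def n_def P_def Q_def)
  have c1: "cos (inner_angle a b c) = t" using ia tb by simp
  have s1: "sin (inner_angle a b c) = \<bar>cr P Q\<bar> / n"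
    using ia tb t2 n0 by (simp add: sin_arccos abs_div)
  show "cos (inner_angle a b c) = ((b - a) \<bullet> (c - a)) / (cmod (b - a) * cmod (c - a))"
    using c1 by (simp add: t_def n_def P_def Q_def)
  show "sin (inner_angle a b c) = \<bar>cr (b - a) (c - a)\<bar> / (cmod (b - a) * cmod (c - a))"
    using s1 by (simp add: n_def P_def Q_def)
  show "cot (inner_angle a b c) = ((b - a) \<bullet> (c - a)) / \<bar>cr (b - a) (c - a)\<bar>"
    using c1 s1 n0 XP by (simp add: cot_def t_def P_def Q_def n_def)
  show "0 \<le> inner_angle a b c" "inner_angle a b c \<le> pi" using ia tb arccos_bounded by auto
qed

lemma base_angle:
  assumes X: "cr (b - a) (c - a) \<noteq> 0" and e: "0 < e" "e \<le> pi/2"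
    and ea: "e \<le> inner_angle a b c" and long1: "cmod (c - a) \<le> cmod (b - a)"
    and long2: "cmod (c - b) \<le> cmod (b - a)"
  shows "\<bar>cr (b - a) (c - a)\<bar> \<ge> sin e * cmod (b - a) * cmod (c - a)"
proof -
  define P where "P = b - a"
  define Q where "Q = c - a"
  have P0: "P \<noteq> 0" "Q \<noteq> 0" using X by (auto simp: cr_def P_def Q_def)
  have "(cmod (Q - P))^2 = (cmod Q)^2 + (cmod P)^2 - 2 * (P \<bullet> Q)"
    unfolding cmod_power2 inner_complex_def by (simp add: power2_eq_square algebra_simps)
  moreover have "cmod (Q - P) \<le> cmod P" using long2 by (simp add: P_def Q_def)
  ultimately have "(cmod Q)^2 + (cmod P)^2 - 2 * (P \<bullet> Q) \<le> (cmod P)^2"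
    by (metis norm_ge_zero power_mono)
  hence dpos: "P \<bullet> Q > 0" using P0 by (smt (verit) zero_less_norm_iff zero_less_power)
  have cpos: "cos (inner_angle a b c) > 0"
    using ia_facts(1)[OF X] dpos P0 by (simp add: P_def Q_def)
  have lt: "inner_angle a b c \<le> pi/2"
  proof (rule ccontr)
    assume "\<not> ?thesis"
    hence "pi/2 < inner_angle a b c" by simp
    moreover have "inner_angle a b c \<le> pi" using ia_facts(5)[OF X] .
    ultimately have "0 < cos (pi - inner_angle a b c)"
      by (intro cos_gt_zero_pi) auto
    hence "cos (inner_angle a b c) < 0" by simp
    thus False using cpos by simp
  qed
  have "sin e \<le> sin (inner_angle a b c)"
    using sin_mono_le_eq[of e "inner_angle a b c"] e ea lt by simp
  hence "sin e \<le> \<bar>cr P Q\<bar> / (cmod P * cmod Q)" using ia_facts(2)[OF X] by (simp add: P_def Q_def)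
  thus ?thesis using P0 by (simp add: field_simps P_def Q_def)
qed

lemma cr_perms:
  "cr (C - A) (B - A) = - cr (B - A) (C - A)"
  "cr (A - B) (C - B) = - cr (B - A) (C - A)"
  "cr (C - B) (A - B) = cr (B - A) (C - A)"
  "cr (A - C) (B - C) = cr (B - A) (C - A)"
  "cr (B - C) (A - C) = - cr (B - A) (C - A)"
  unfolding cr_def by (simp_all add: algebra_simps)

lemma ia_sym: "inner_angle a b c = inner_angle a c b"
  unfolding inner_angle_def by (simp add: inner_commute mult.commute)

lemma tri_fat:
  fixes A B C :: complex
  assumes X: "cr (B - A) (C - A) \<noteq> 0" and e: "0 < e" "e \<le> pi/2"
    and aA: "e \<le> inner_angle A B C" and aB: "e \<le> inner_angle B C A" and aC: "e \<le> inner_angle C A B"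
  defines "D \<equiv> max (cmod (B - A)) (max (cmod (C - B)) (cmod (A - C)))"
  shows "\<bar>cr (B - A) (C - A)\<bar> \<ge> sin e * D^2 / 2"
proof -
  let ?X = "\<bar>cr (B - A) (C - A)\<bar>"
  have s0: "sin e \<ge> 0" using e by (intro sin_ge_zero) auto
  have aA': "e \<le> inner_angle A C B" using aA ia_sym by metis
  have aB': "e \<le> inner_angle B A C" using aB ia_sym by metis
  have aC': "e \<le> inner_angle C B A" using aC ia_sym by metis
  note cp = cr_perms[of C A B] cr_perms[of A B C]
  have XB: "cr (A - B) (C - B) \<noteq> 0" "cr (C - B) (A - B) \<noteq> 0" using X cp by linarith+
  have XC: "cr (A - C) (B - C) \<noteq> 0" "cr (B - C) (A - C) \<noteq> 0" using X cp by linarith+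
  have XA: "cr (C - A) (B - A) \<noteq> 0" using X cp by linarith
  have n1: "cmod (A - B) = cmod (B - A)" "cmod (B - C) = cmod (C - B)" "cmod (C - A) = cmod (A - C)"
    by (simp_all add: norm_minus_commute)
  have tri1: "cmod (B - A) \<le> cmod (C - A) + cmod (C - B)"
  proof -
    have "B - A = (C - A) - (C - B)" by simp
    thus ?thesis using norm_triangle_ineq4[of "C - A" "C - B"] by metis
  qed
  have tri2: "cmod (C - B) \<le> cmod (A - B) + cmod (A - C)"
  proof -
    have "C - B = (A - B) - (A - C)" by simp
    thus ?thesis using norm_triangle_ineq4[of "A - B" "A - C"] by metis
  qed
  have tri3: "cmod (A - C) \<le> cmod (B - C) + cmod (B - A)"
  proof -
    have "A - C = (B - C) - (B - A)" by simp
    thus ?thesis using norm_triangle_ineq4[of "B - C" "B - A"] by metis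
  qed
  have a1: "\<bar>cr (A - B) (C - B)\<bar> = ?X" "\<bar>cr (C - B) (A - B)\<bar> = ?X" "\<bar>cr (B - C) (A - C)\<bar> = ?X"
     "\<bar>cr (A - C) (B - C)\<bar> = ?X" "\<bar>cr (C - A) (B - A)\<bar> = ?X"
    using cp by simp_all
  have sD: "sin e * D \<ge> 0" using s0 unfolding D_def by (intro mult_nonneg_nonneg) (auto simp: le_max_iff_disj)
  consider "D = cmod (B - A)" | "D = cmod (C - B)" | "D = cmod (A - C)" unfolding D_def by linarith
  then show ?thesis
  proof cases
    case 1
    have l1: "cmod (C - A) \<le> cmod (B - A)" "cmod (C - B) \<le> cmod (B - A)" using 1 n1 unfolding D_def by linarith+
    have h1: "?X \<ge> sin e * cmod (B - A) * cmod (C - A)" by (rule base_angle[OF X e aA l1])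
    have h2: "\<bar>cr (A - B) (C - B)\<bar> \<ge> sin e * cmod (A - B) * cmod (C - B)"
      by (rule base_angle[OF XB(1) e aB']) (use l1 n1 in auto)
    have h1': "?X \<ge> sin e * D * cmod (C - A)" using h1 1 by simp
    have h2': "?X \<ge> sin e * D * cmod (C - B)" using h2 1 n1 a1 by simp
    have "sin e * D * D \<le> sin e * D * (cmod (C - A) + cmod (C - B))"
      using tri1 1 sD by (intro mult_left_mono) auto
    thus ?thesis using h1' h2' by (simp add: power2_eq_square distrib_left)
  next
    case 2
    have l1: "cmod (A - B) \<le> cmod (C - B)" "cmod (A - C) \<le> cmod (C - B)" using 2 n1 unfolding D_def by linarith+
    have h1: "\<bar>cr (C - B) (A - B)\<bar> \<ge> sin e * cmod (C - B) * cmod (A - B)"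
      by (rule base_angle[OF XB(2) e aB l1])
    have h2: "\<bar>cr (B - C) (A - C)\<bar> \<ge> sin e * cmod (B - C) * cmod (A - C)"
      by (rule base_angle[OF XC(2) e aC']) (use l1 n1 in auto)
    have h1': "?X \<ge> sin e * D * cmod (A - B)" using h1 2 a1 by simp
    have h2': "?X \<ge> sin e * D * cmod (A - C)" using h2 2 n1 a1 by simp
    have "sin e * D * D \<le> sin e * D * (cmod (A - B) + cmod (A - C))"
      using tri2 2 sD by (intro mult_left_mono) auto
    thus ?thesis using h1' h2' by (simp add: power2_eq_square distrib_left)
  next
    case 3
    have l1: "cmod (B - C) \<le> cmod (A - C)" "cmod (B - A) \<le> cmod (A - C)" using 3 n1 unfolding D_def by linarith+
    have h1: "\<bar>cr (A - C) (B - C)\<bar> \<ge> sin e * cmod (A - C) * cmod (B - C)"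
      by (rule base_angle[OF XC(1) e aC l1])
    have h2: "\<bar>cr (C - A) (B - A)\<bar> \<ge> sin e * cmod (C - A) * cmod (B - A)"
      by (rule base_angle[OF XA e aA']) (use l1 n1 in auto)
    have h1': "?X \<ge> sin e * D * cmod (B - C)" using h1 3 a1 by simp
    have h2': "?X \<ge> sin e * D * cmod (B - A)" using h2 3 n1 a1 by simp
    have "sin e * D * D \<le> sin e * D * (cmod (B - C) + cmod (B - A))"
      using tri3 3 sD by (intro mult_left_mono) auto
    thus ?thesis using h1' h2' by (simp add: power2_eq_square distrib_left)
  qed
qed

lemma dist_opp:
  assumes "y \<in> closed_segment B C"
  shows "\<bar>cr (B - A) (C - A)\<bar> \<le> cmod (y - A) * cmod (C - B)"
proof -
  obtain u where y: "y = (1 - u) *\<^sub>R B + u *\<^sub>R C" using assms by (auto simp: in_segment)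
  have "cr (y - A) (C - B) = cr (B - A) (C - A)"
    unfolding y cr_def by (simp add: algebra_simps)
  thus ?thesis using cr_le[of "y - A" "C - B"] by simp
qed

lemma disk_in_tri:
  fixes A B C :: complex
  assumes X: "cr (B - A) (C - A) \<noteq> 0" and D: "cmod (B - A) \<le> D" "cmod (C - B) \<le> D" "cmod (A - C) \<le> D"
  shows "ball ((A + B + C) / 3) (\<bar>cr (B - A) (C - A)\<bar> / (3 * D)) \<subseteq> convex hull {A, B, C}"
proof
  fix x assume x: "x \<in> ball ((A + B + C) / 3) (\<bar>cr (B - A) (C - A)\<bar> / (3 * D))"
  define X where "X = cr (B - A) (C - A)"
  define g where "g = (A + B + C) / 3"
  define d where "d = x - g"
  have "B - A \<noteq> 0" using X by (auto simp: cr_def)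
  hence Dpos: "D > 0" using D(1) by (smt (verit) zero_less_norm_iff)
  have dlt: "cmod d * D < \<bar>X\<bar> / 3"
    using x Dpos unfolding d_def g_def X_def by (simp add: dist_norm norm_minus_commute field_simps)
  define la where "la = cr (B - x) (C - x) / X"
  define lb where "lb = cr (C - x) (A - x) / X"
  define lc where "lc = cr (A - x) (B - x) / X"
  have ea: "cr (B - x) (C - x) = X / 3 - cr d (C - B)"
    unfolding d_def g_def X_def cr_def by (simp add: field_simps)
  have eb: "cr (C - x) (A - x) = X / 3 - cr d (A - C)"
    unfolding d_def g_def X_def cr_def by (simp add: field_simps)
  have ec: "cr (A - x) (B - x) = X / 3 - cr d (B - A)"
    unfolding d_def g_def X_def cr_def by (simp add: field_simps)
  have bnd: "\<bar>cr d w\<bar> < \<bar>X\<bar> / 3" if "cmod w \<le> D" for w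
  proof -
    have "\<bar>cr d w\<bar> \<le> cmod d * cmod w" by (rule cr_le)
    also have "\<dots> \<le> cmod d * D" using that by (intro mult_left_mono) auto
    finally show ?thesis using dlt by simp
  qed
  have pos: "0 < t / X" if "t = X / 3 - r" "\<bar>r\<bar> < \<bar>X\<bar> / 3" for t r
  proof (cases "X > 0")
    case True thus ?thesis using that by (intro divide_pos_pos) auto
  next
    case False hence "X < 0" using X X_def by simp
    thus ?thesis using that by (intro divide_neg_neg) auto
  qed
  have "0 < la" unfolding la_def by (rule pos[OF ea bnd[OF D(2)]])
  moreover have "0 < lb" unfolding lb_def by (rule pos[OF eb bnd[OF D(3)]])
  moreover have "0 < lc" unfolding lc_def by (rule pos[OF ec bnd[OF D(1)]])
  moreover have "la + lb + lc = 1"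
  proof -
    have "cr (B - x) (C - x) + cr (C - x) (A - x) + cr (A - x) (B - x) = X"
      unfolding X_def cr_def by (simp add: algebra_simps)
    thus ?thesis using X unfolding la_def lb_def lc_def X_def by (simp add: field_simps)
  qed
  moreover have "x = la *\<^sub>R A + lb *\<^sub>R B + lc *\<^sub>R C"
  proof -
    have "X *\<^sub>R x = cr (B - x) (C - x) *\<^sub>R A + cr (C - x) (A - x) *\<^sub>R B + cr (A - x) (B - x) *\<^sub>R C"
      unfolding X_def cr_def by (simp add: complex_eq_iff; algebra)
    hence "x = (1 / X) *\<^sub>R (cr (B - x) (C - x) *\<^sub>R A + cr (C - x) (A - x) *\<^sub>R B + cr (A - x) (B - x) *\<^sub>R C)"
    proof -
      assume h: "X *\<^sub>R x = cr (B - x) (C - x) *\<^sub>R A + cr (C - x) (A - x) *\<^sub>R B + cr (A - x) (B - x) *\<^sub>R C"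
      have "x = (1 / X) *\<^sub>R (X *\<^sub>R x)" using X X_def by simp
      thus ?thesis by (simp only: h)
    qed
    thus ?thesis unfolding la_def lb_def lc_def by (simp add: scaleR_add_right divide_inverse mult.commute)
  qed
  ultimately show "x \<in> convex hull {A, B, C}" unfolding convex_hull_3
    by (intro CollectI exI[of _ la] exI[of _ lb] exI[of _ lc]) auto
qed

lemma packing:
  fixes c :: "'i \<Rightarrow> complex"
  assumes I: "finite I" and r: "\<And>i. i \<in> I \<Longrightarrow> r i > 0"
    and disj: "\<And>i j. i \<in> I \<Longrightarrow> j \<in> I \<Longrightarrow> i \<noteq> j \<Longrightarrow> ball (c i) (r i) \<inter> ball (c j) (r j) = {}"
    and sub: "\<And>i. i \<in> I \<Longrightarrow> ball (c i) (r i) \<subseteq> ball a R"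
  shows "(\<Sum>i\<in>I. (r i)^2) \<le> R^2"
proof (cases "I = {}")
  case True thus ?thesis by simp
next
  case False
  then obtain i0 where i0: "i0 \<in> I" by auto
  have R0: "R \<ge> 0"
  proof -
    have "c i0 \<in> ball a R" using sub[OF i0] r[OF i0] centre_in_ball[of "c i0" "r i0"] by blast
    thus ?thesis by (smt (verit) dist_not_less_zero mem_ball)
  qed
  define k where "k = measure lborel (ball (0::complex) 1)"
  have cb: "measure lborel (ball (z::complex) s) = s^2 * k" if "s \<ge> 0" for z s
    using content_ball_conv_unit_ball[OF that, of z] by (simp add: k_def)
  have k0: "k > 0" unfolding k_def by (rule content_ball_pos) simp
  have emf: "emeasure lborel (ball (z::complex) s) < top" for z s
    using emeasure_bounded_finite[of "ball z s"] by simp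
  have fm: "ball z s \<in> fmeasurable lborel" for z :: complex and s
    by (intro fmeasurableI) (auto simp: borel_open emf)
  have "measure lborel (\<Union>i\<in>I. ball (c i) (r i)) = (\<Sum>i\<in>I. measure lborel (ball (c i) (r i)))"
  proof (rule measure_finite_Union[OF I])
    show "(\<lambda>i. ball (c i) (r i)) ` I \<subseteq> sets lborel" by (auto simp: borel_open)
    show "disjoint_family_on (\<lambda>i. ball (c i) (r i)) I" using disj by (auto simp: disjoint_family_on_def)
    fix i assume "i \<in> I"
    show "emeasure lborel (ball (c i) (r i)) \<noteq> \<infinity>" using emf[of "c i" "r i"] by simp
  qed
  also have "\<dots> = (\<Sum>i\<in>I. (r i)^2) * k" using r by (simp add: cb sum_distrib_right less_imp_le)
  finally have eq: "measure lborel (\<Union>i\<in>I. ball (c i) (r i)) = (\<Sum>i\<in>I. (r i)^2) * k" .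
  have "measure lborel (\<Union>i\<in>I. ball (c i) (r i)) \<le> measure lborel (ball a R)"
    by (rule measure_mono_fmeasurable) (use sub fm in \<open>auto intro!: borel_open\<close>)
  hence "(\<Sum>i\<in>I. (r i)^2) * k \<le> R^2 * k" using eq cb[OF R0] by simp
  thus ?thesis using k0 by simp
qed

lemma ball_not_in_small_hull:
  fixes S :: "complex set"
  assumes "card S \<le> 2" "finite S" "r > 0" "ball z r \<subseteq> convex hull S"
  shows False
proof -
  obtain u v where S: "S \<subseteq> {u, v}"
  proof -
    consider "S = {}" | "\<exists>u. S = {u}" | "\<exists>u v. S = {u, v}"
    proof -
      have "card S = 0 \<or> card S = 1 \<or> card S = 2" using assms(1) by linarith
      thus ?thesis using assms(2) that by (auto simp: card_2_iff card_1_singleton_iff)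
    qed
    thus ?thesis using that by (cases) auto
  qed
  have "convex hull S \<subseteq> closed_segment u v"
    by (rule hull_minimal) (use S ends_in_segment in auto)
  hence "ball z r \<subseteq> closed_segment u v" using assms(4) by auto
  hence "ball z r \<subseteq> interior (closed_segment u v)" by (simp add: interior_maximal)
  thus False using assms(3) interior_closed_segment_ge2[of u v] centre_in_ball[of z r] by auto
qed

definition Bf :: "('v \<Rightarrow> complex) \<Rightarrow> 'v set \<Rightarrow> ('v \<Rightarrow> real) \<Rightarrow> ('v \<Rightarrow> real) \<Rightarrow> real" where
  "Bf p f x y = (1/4) * (\<Sum>k\<in>f. \<Sum>i\<in>f - {k}. \<Sum>j\<in>f - {k}. cot (theta p k i j) * (x i - x j) * (y i - y j))"

lemma theta_sym: "theta p k i j = theta p k j i"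
  unfolding theta_def using ia_sym by metis

lemma noncollinear_cr:
  assumes "\<not> collinear {A, B, C}"
  shows "cr (B - A) (C - A) \<noteq> 0"
proof
  assume h: "cr (B - A) (C - A) = 0"
  have "A \<noteq> B"
  proof
    assume "A = B"
    hence "{A, B, C} = {A, C}" by simp
    thus False using assms collinear_2 by metis
  qed
  define w where "w = C - A"
  define z where "z = B - A"
  have z0: "z \<noteq> 0" using \<open>A \<noteq> B\<close> by (simp add: z_def)
  have cz: "Re z * Im w - Im z * Re w = 0" using h by (simp add: z_def w_def cr_def)
  define u where "u = (w \<bullet> z) / (cmod z)^2"
  have zz: "(cmod z)^2 > 0" using z0 by simp
  have "(cmod z)^2 *\<^sub>R w = (w \<bullet> z) *\<^sub>R z"
  proof -
    have r: "(Re z ^ 2 + Im z ^ 2) * Re w = (Re w * Re z + Im w * Im z) * Re z" using cz by algebra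
    have i: "(Re z ^ 2 + Im z ^ 2) * Im w = (Re w * Re z + Im w * Im z) * Im z" using cz by algebra
    show ?thesis unfolding complex_eq_iff cmod_power2 inner_complex_def using r i by simp
  qed
  hence "(1 / (cmod z)^2) *\<^sub>R ((cmod z)^2 *\<^sub>R w) = (1 / (cmod z)^2) *\<^sub>R ((w \<bullet> z) *\<^sub>R z)" by simp
  hence "w = u *\<^sub>R z" using zz by (simp add: u_def)
  hence "C = (1 - u) *\<^sub>R A + u *\<^sub>R B" unfolding w_def z_def by (simp add: algebra_simps)
  hence "collinear {B, C, A}" unfolding collinear_3_expand by (intro disjI2 exI[of _ u]) simp
  thus False using assms by (simp add: insert_commute)
qed

lemma Bf_explicit:
  assumes d: "a \<noteq> b" "b \<noteq> c" "a \<noteq> c"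
    and X: "cr (p a - p c) (p b - p c) \<noteq> 0"
  shows "Bf p {a, b, c} x y =
     (((x a - x c) *\<^sub>R (p b - p c) - (x b - x c) *\<^sub>R (p a - p c)) \<bullet>
      ((y a - y c) *\<^sub>R (p b - p c) - (y b - y c) *\<^sub>R (p a - p c))) / (2 * \<bar>cr (p a - p c) (p b - p c)\<bar>)"
proof -
  define P where "P = p a - p c"
  define Q where "Q = p b - p c"
  define n where "n = \<bar>cr P Q\<bar>"
  have n0: "n > 0" using X by (simp add: n_def P_def Q_def)
  have e1: "Bf p {a, b, c} x y = (1/2) * (cot (theta p a b c) * (x b - x c) * (y b - y c)
      + cot (theta p b a c) * (x a - x c) * (y a - y c) + cot (theta p c a b) * (x a - x b) * (y a - y b))"
    unfolding Bf_def using d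
    by (simp add: insert_Diff_if theta_sym[of p _ c b] theta_sym[of p _ c a] theta_sym[of p _ b a] algebra_simps)
  have Xc: "cr (p a - p c) (p b - p c) = cr P Q" by (simp add: P_def Q_def)
  have xa: "cr (p b - p a) (p c - p a) \<noteq> 0" "\<bar>cr (p b - p a) (p c - p a)\<bar> = n"
    using cr_perms[of "p c" "p a" "p b"] X by (simp_all add: n_def P_def Q_def)
  have xb: "cr (p a - p b) (p c - p b) \<noteq> 0" "\<bar>cr (p a - p b) (p c - p b)\<bar> = n"
    using cr_perms[of "p c" "p a" "p b"] X by (simp_all add: n_def P_def Q_def)
  have ca: "cot (theta p a b c) = ((Q - P) \<bullet> (- P)) / n"
    using ia_facts(3)[OF xa(1)] xa(2) unfolding theta_def by (simp add: P_def Q_def)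
  have cb: "cot (theta p b a c) = ((P - Q) \<bullet> (- Q)) / n"
    using ia_facts(3)[OF xb(1)] xb(2) unfolding theta_def by (simp add: P_def Q_def)
  have cc: "cot (theta p c a b) = (P \<bullet> Q) / n"
    using ia_facts(3)[OF X] unfolding theta_def by (simp add: P_def Q_def n_def)
  have "Bf p {a, b, c} x y = (((x a - x c) *\<^sub>R Q - (x b - x c) *\<^sub>R P) \<bullet> ((y a - y c) *\<^sub>R Q - (y b - y c) *\<^sub>R P)) / (2 * n)"
    unfolding e1 ca cb cc using n0
    by (simp add: field_simps inner_diff_left inner_diff_right inner_commute[of Q P]) (simp add: algebra_simps inner_commute[of Q P])
  thus ?thesis by (simp add: P_def Q_def n_def)
qed

lemma vec_zero:
  fixes P Q :: complex
  assumes "cr P Q \<noteq> 0" "s *\<^sub>R Q - t *\<^sub>R P = 0"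
  shows "s = 0" "t = 0"
proof -
  have "cr P (s *\<^sub>R Q - t *\<^sub>R P) = s * cr P Q" unfolding cr_def by (simp add: algebra_simps)
  thus "s = 0" using assms by (simp add: cr_def)
  have "cr Q (s *\<^sub>R Q - t *\<^sub>R P) = t * cr P Q" unfolding cr_def by (simp add: algebra_simps)
  thus "t = 0" using assms by (simp add: cr_def)
qed

definition Dm :: "('v \<Rightarrow> complex) \<Rightarrow> 'v set \<Rightarrow> real" where
  "Dm p f = Max ((\<lambda>(i, j). cmod (p i - p j)) ` (f \<times> f))"

lemma Dm_ge: "finite f \<Longrightarrow> i \<in> f \<Longrightarrow> j \<in> f \<Longrightarrow> cmod (p i - p j) \<le> Dm p f"
  unfolding Dm_def by (rule Max_ge) force+

lemma Dm3: "Dm p {a, b, c} = max (cmod (p b - p a)) (max (cmod (p c - p b)) (cmod (p a - p c)))"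
proof (rule antisym)
  show "Dm p {a, b, c} \<le> max (cmod (p b - p a)) (max (cmod (p c - p b)) (cmod (p a - p c)))"
    unfolding Dm_def
    by (rule Max.boundedI) (auto simp: norm_minus_commute le_max_iff_disj)
  show "max (cmod (p b - p a)) (max (cmod (p c - p b)) (cmod (p a - p c))) \<le> Dm p {a, b, c}"
    using Dm_ge[of "{a,b,c}" b a p] Dm_ge[of "{a,b,c}" c b p] Dm_ge[of "{a,b,c}" a c p] by simp
qed

lemma Dm_nonneg: "finite f \<Longrightarrow> f \<noteq> {} \<Longrightarrow> 0 \<le> Dm p f"
  using Dm_ge[of f _ _ p] by fastforce

locale plane =
  fixes V :: "'v set" and F :: "'v set set" and p :: "'v \<Rightarrow> complex" and e :: real
  assumes surf: "tri_surface V F" and geo: "geodesic_homeo V F p"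
    and e: "0 < e" "e \<le> pi/2"
    and ang: "\<And>i j k. {i, j, k} \<in> F \<Longrightarrow> card {i, j, k} = 3 \<Longrightarrow> e \<le> theta p i j k"
begin

lemma sin_e: "0 < sin e" "sin e \<le> 1"
  using e by (auto intro: sin_gt_zero)

lemma face_basic: "f \<in> F \<Longrightarrow> f \<subseteq> V \<and> card f = 3"
  using surf unfolding tri_surface_def by blast

lemma face_finite: "f \<in> F \<Longrightarrow> finite f"
  using face_basic by (metis card.infinite zero_neq_numeral)

lemma face3: assumes "f \<in> F" obtains a b c where "f = {a, b, c}" "a \<noteq> b" "b \<noteq> c" "a \<noteq> c"
  using face_basic[OF assms] card_3_iff by metis

lemma face_cr: assumes "{a, b, c} \<in> F" "a \<noteq> b" "b \<noteq> c" "a \<noteq> c"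
  shows "cr (p b - p a) (p c - p a) \<noteq> 0"
proof -
  have "\<not> collinear (p ` {a, b, c})" using geo assms(1) unfolding geodesic_homeo_def by blast
  thus ?thesis by (intro noncollinear_cr) simp
qed

lemma face_ang: assumes "{a, b, c} \<in> F" "a \<noteq> b" "b \<noteq> c" "a \<noteq> c"
  shows "e \<le> theta p a b c"
  using ang[OF assms(1)] assms(2-4) by simp

lemma face_fat: assumes f: "{a, b, c} \<in> F" "a \<noteq> b" "b \<noteq> c" "a \<noteq> c"
  shows "sin e * (Dm p {a, b, c})^2 / 2 \<le> \<bar>cr (p b - p a) (p c - p a)\<bar>"
proof -
  have f2: "{b, c, a} \<in> F" "{c, a, b} \<in> F" using f(1) by (simp_all add: insert_commute)
  show ?thesis unfolding Dm3
    by (rule tri_fat[OF face_cr[OF f] e])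
       (use face_ang[OF f] face_ang[OF f2(1)] face_ang[OF f2(2)] f in \<open>auto simp: theta_def\<close>)
qed

lemma face_Dm_pos: assumes "f \<in> F" shows "0 < Dm p f"
proof -
  obtain a b c where f: "f = {a, b, c}" "a \<noteq> b" "b \<noteq> c" "a \<noteq> c" using face3[OF assms] .
  have "cr (p b - p a) (p c - p a) \<noteq> 0" using face_cr assms f by auto
  hence "p b \<noteq> p a" by (auto simp: cr_def)
  hence "0 < cmod (p b - p a)" by simp
  also have "\<dots> \<le> Dm p f" using f by (intro Dm_ge) auto
  finally show ?thesis .
qed

lemma face_side: assumes f: "f \<in> F" "i \<in> f" "j \<in> f" "i \<noteq> j"
  shows "sin e * Dm p f / 2 \<le> cmod (p j - p i)"
proof -
  obtain k where k: "k \<in> f" "k \<noteq> i" "k \<noteq> j" "f = {i, j, k}"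
  proof -
    obtain a b c where abc: "f = {a, b, c}" "a \<noteq> b" "b \<noteq> c" "a \<noteq> c" using face3[OF f(1)] .
    show ?thesis using abc f(2-4) that by (auto simp: insert_commute)
  qed
  have F1: "{i, j, k} \<in> F" using f k by simp
  have X: "sin e * (Dm p f)^2 / 2 \<le> \<bar>cr (p j - p i) (p k - p i)\<bar>"
    using face_fat[OF F1] f k by auto
  have "\<bar>cr (p j - p i) (p k - p i)\<bar> \<le> cmod (p j - p i) * cmod (p k - p i)" by (rule cr_le)
  also have "\<dots> \<le> cmod (p j - p i) * Dm p f"
    using Dm_ge[OF face_finite[OF f(1)] k(1) f(2)] by (intro mult_left_mono) auto
  finally have "sin e * (Dm p f)^2 / 2 \<le> cmod (p j - p i) * Dm p f" using X by linarith
  thus ?thesis using face_Dm_pos[OF f(1)] by (simp add: power2_eq_square field_simps)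
qed

lemma Bf_face_cr: "cr (p a - p c) (p b - p c) = cr (p b - p a) (p c - p a)"
  using cr_perms(4) by blast

lemma Bf_face:
  assumes f: "{a, b, c} \<in> F" "a \<noteq> b" "b \<noteq> c" "a \<noteq> c"
  shows "Bf p {a, b, c} x y =
     (((x a - x c) *\<^sub>R (p b - p c) - (x b - x c) *\<^sub>R (p a - p c)) \<bullet>
      ((y a - y c) *\<^sub>R (p b - p c) - (y b - y c) *\<^sub>R (p a - p c))) / (2 * \<bar>cr (p a - p c) (p b - p c)\<bar>)"
  by (rule Bf_explicit) (use f face_cr[OF f] Bf_face_cr[where a=a and b=b and c=c] in auto)

lemma Bf_props:
  assumes f: "f \<in> F"
  shows "0 \<le> Bf p f x x"
    and "\<bar>Bf p f x y\<bar> \<le> sqrt (Bf p f x x) * sqrt (Bf p f y y)"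
    and "(\<And>i. i \<in> f \<Longrightarrow> \<bar>x i\<bar> \<le> A) \<Longrightarrow> Bf p f x x \<le> 16 / sin e * A^2"
    and "Bf p f x x = 0 \<Longrightarrow> i \<in> f \<Longrightarrow> j \<in> f \<Longrightarrow> x i = x j"
    and "Bf p f x (\<lambda>i. \<alpha> * y i + z i) = \<alpha> * Bf p f x y + Bf p f x z"
proof -
  obtain a b c where abc: "f = {a, b, c}" "a \<noteq> b" "b \<noteq> c" "a \<noteq> c" using face3[OF f] .
  have F1: "{a, b, c} \<in> F" using f abc by simp
  define P where "P = p a - p c"
  define Q where "Q = p b - p c"
  define n where "n = \<bar>cr P Q\<bar>"
  define vv where "vv = (\<lambda>x::'v \<Rightarrow> real. (x a - x c) *\<^sub>R Q - (x b - x c) *\<^sub>R P)"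
  have X: "cr P Q \<noteq> 0" using face_cr[OF F1 abc(2-4)] Bf_face_cr[where a=a and b=b and c=c] by (simp add: P_def Q_def)
  have n0: "n > 0" using X by (simp add: n_def)
  have B: "\<And>x y. Bf p f x y = (vv x \<bullet> vv y) / (2 * n)"
    using Bf_face[OF F1 abc(2-4)] abc(1) by (simp add: vv_def n_def P_def Q_def)
  show nn: "0 \<le> Bf p f x x" unfolding B using n0 by simp
  show "\<bar>Bf p f x y\<bar> \<le> sqrt (Bf p f x x) * sqrt (Bf p f y y)"
  proof -
    have "\<bar>Bf p f x y\<bar> = \<bar>vv x \<bullet> vv y\<bar> / (2 * n)" unfolding B using n0 by (simp add: abs_div)
    also have "\<dots> \<le> norm (vv x) * norm (vv y) / (2 * n)"
      using n0 by (intro divide_right_mono Cauchy_Schwarz_ineq2) auto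
    also have "\<dots> = sqrt (Bf p f x x) * sqrt (Bf p f y y)"
      unfolding B using n0 by (simp add: real_sqrt_divide real_sqrt_mult power2_norm_eq_inner[symmetric] field_simps)
    finally show ?thesis .
  qed
  show "(\<And>i. i \<in> f \<Longrightarrow> \<bar>x i\<bar> \<le> A) \<Longrightarrow> Bf p f x x \<le> 16 / sin e * A^2"
  proof -
    assume xA: "\<And>i. i \<in> f \<Longrightarrow> \<bar>x i\<bar> \<le> A"
    define D where "D = Dm p f"
    have D0: "D > 0" using face_Dm_pos[OF f] by (simp add: D_def)
    have PD: "cmod P \<le> D" "cmod Q \<le> D"
      using Dm_ge[OF face_finite[OF f], of a c p] Dm_ge[OF face_finite[OF f], of b c p] abc
      by (auto simp: P_def Q_def D_def)
    have s: "\<bar>x a - x c\<bar> \<le> 2 * A" "\<bar>x b - x c\<bar> \<le> 2 * A" using xA abc by (smt (verit) insert_iff)+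
    have "norm (vv x) \<le> \<bar>x a - x c\<bar> * cmod Q + \<bar>x b - x c\<bar> * cmod P"
      unfolding vv_def by (metis norm_scaleR norm_triangle_ineq4 real_norm_def)
    also have "\<dots> \<le> 2 * A * D + 2 * A * D"
      using s PD by (intro add_mono mult_mono) auto
    finally have nv: "norm (vv x) \<le> 4 * A * D" by simp
    have nv2: "(norm (vv x))^2 \<le> (4 * A * D)^2" using nv by (intro power_mono) auto
    have fat: "sin e * D^2 / 2 \<le> n"
      using face_fat[OF F1 abc(2-4)] Bf_face_cr[where a=a and b=b and c=c] abc(1) by (simp add: n_def P_def Q_def D_def)
    have "Bf p f x x = (norm (vv x))^2 / (2 * n)" unfolding B by (simp add: power2_norm_eq_inner)
    also have "\<dots> \<le> (4 * A * D)^2 / (2 * n)" using nv2 n0 by (intro divide_right_mono) auto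
    also have "\<dots> \<le> (4 * A * D)^2 / (sin e * D^2)"
      using fat n0 sin_e D0 by (intro divide_left_mono) auto
    also have "\<dots> = 16 / sin e * A^2" using D0 sin_e by (simp add: field_simps power2_eq_square)
    finally show ?thesis .
  qed
  show "Bf p f x x = 0 \<Longrightarrow> i \<in> f \<Longrightarrow> j \<in> f \<Longrightarrow> x i = x j"
  proof -
    assume "Bf p f x x = 0" "i \<in> f" "j \<in> f"
    hence "vv x \<bullet> vv x = 0" unfolding B using n0 by simp
    hence "vv x = 0" by simp
    hence "x a - x c = 0" "x b - x c = 0" using vec_zero[OF X] unfolding vv_def by blast+
    thus "x i = x j" using \<open>i \<in> f\<close> \<open>j \<in> f\<close> abc by auto
  qed
  show "Bf p f x (\<lambda>i. \<alpha> * y i + z i) = \<alpha> * Bf p f x y + Bf p f x z"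
    unfolding B vv_def using n0
    by (simp add: inner_diff_right inner_add_right inner_scaleR_right algebra_simps add_divide_distrib diff_divide_distrib)
qed

end

lemma Bf_expand:
  assumes d: "a \<noteq> b" "b \<noteq> c" "a \<noteq> c"
  shows "Bf p {a, b, c} x y = (1/2) * (cot (theta p a b c) * (x b - x c) * (y b - y c)
      + cot (theta p b a c) * (x a - x c) * (y a - y c) + cot (theta p c a b) * (x a - x b) * (y a - y b))"
  unfolding Bf_def using d
  by (simp add: insert_Diff_if theta_sym[of p _ c b] theta_sym[of p _ c a] theta_sym[of p _ b a] algebra_simps)

context plane begin

definition Lap :: "('v \<Rightarrow> real) \<Rightarrow> 'v \<Rightarrow> real" where
  "Lap u i = (\<Sum>j\<in>nbrs F i. cot_weight F p i j * (u j - u i))"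

lemma star_fin: "v \<in> V \<Longrightarrow> finite {f \<in> F. v \<in> f}"
  using surf unfolding tri_surface_def by blast

lemma star_union_fin: assumes "v \<in> V" shows "finite (\<Union>{f \<in> F. v \<in> f})"
  using star_fin[OF assms] face_finite by auto

lemma nbrs_sub: "nbrs F i \<subseteq> \<Union>{f \<in> F. i \<in> f}"
  unfolding nbrs_def tri_edges_def by auto

lemma nbrs_iff: "j \<in> nbrs F i \<longleftrightarrow> i \<noteq> j \<and> (\<exists>f\<in>F. i \<in> f \<and> j \<in> f)"
  unfolding nbrs_def tri_edges_def by (auto simp: card_2_iff)

definition Kset where "Kset i j = {k. {i, j, k} \<in> F \<and> k \<noteq> i \<and> k \<noteq> j}"

lemma Kset_sub: "Kset i j \<subseteq> \<Union>{f \<in> F. i \<in> f}"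
  unfolding Kset_def by auto

lemma face_eq3: assumes "{i, j, k} \<in> F" "i \<noteq> j" "j \<noteq> k" "i \<noteq> k" "{i, j, k} = {a, b, c}"
  shows "(i, j, k) \<in> {(a, b, c), (a, c, b), (b, a, c), (b, c, a), (c, a, b), (c, b, a)}"
proof -
  have "i \<in> {a, b, c}" "j \<in> {a, b, c}" "k \<in> {a, b, c}" using assms(5) by auto
  thus ?thesis using assms(2-4) by auto
qed

lemma green:
  assumes W: "finite W" "W \<subseteq> V" and w0: "\<And>i. i \<notin> W \<Longrightarrow> w i = 0"
  shows "(\<Sum>i\<in>W. w i * Lap u i) = - (\<Sum>f\<in>{f \<in> F. f \<inter> W \<noteq> {}}. Bf p f u w)"
proof -
  define T where "T = {(i, j, k). i \<in> W \<and> {i, j, k} \<in> F \<and> i \<noteq> j \<and> j \<noteq> k \<and> i \<noteq> k}"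
  define \<phi> where "\<phi> = (\<lambda>(i, j, k). w i * ((1/2) * cot (theta p k i j) * (u j - u i)))"
  define FW where "FW = {f \<in> F. f \<inter> W \<noteq> {}}"
  have finN: "finite (nbrs F i)" if "i \<in> W" for i
    using star_union_fin[of i] that W nbrs_sub[of i] by (meson finite_subset subsetD)
  have finK: "finite (Kset i j)" if "i \<in> W" for i j
    using star_union_fin[of i] that W Kset_sub[of i j] by (meson finite_subset subsetD)
  have TS: "T = Sigma W (\<lambda>i. Sigma (nbrs F i) (\<lambda>j. Kset i j))"
  proof (rule set_eqI)
    fix t :: "'v \<times> 'v \<times> 'v"
    obtain i j k where t: "t = (i, j, k)" by (cases t) auto
    show "t \<in> T \<longleftrightarrow> t \<in> Sigma W (\<lambda>i. Sigma (nbrs F i) (\<lambda>j. Kset i j))"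
      unfolding t T_def Kset_def by (auto simp: nbrs_iff)
  qed
  have finT: "finite T" unfolding TS using W finN finK by (intro finite_SigmaI) auto
  have S1: "(\<Sum>i\<in>W. w i * Lap u i) = (\<Sum>t\<in>T. \<phi> t)"
  proof -
    have "(\<Sum>i\<in>W. w i * Lap u i) = (\<Sum>i\<in>W. \<Sum>j\<in>nbrs F i. \<Sum>k\<in>Kset i j. \<phi> (i, j, k))"
      unfolding Lap_def cot_weight_def \<phi>_def Kset_def
      by (simp add: sum_distrib_left sum_distrib_right mult.assoc)
    also have "\<dots> = (\<Sum>t\<in>T. \<phi> t)"
      unfolding TS by (simp add: sum.Sigma W finN finK)
    finally show ?thesis .
  qed
  define g where "g = (\<lambda>(i::'v, j::'v, k::'v). {i, j, k})"
  have finFW: "finite FW"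
  proof -
    have "FW \<subseteq> (\<Union>i\<in>W. {f \<in> F. i \<in> f})" unfolding FW_def by auto
    thus ?thesis using W star_fin by (meson finite_UN_I finite_subset subsetD)
  qed
  have gT: "g ` T \<subseteq> FW" unfolding g_def T_def FW_def by auto
  have S2: "(\<Sum>t\<in>T. \<phi> t) = (\<Sum>f\<in>FW. \<Sum>t\<in>{t \<in> T. g t = f}. \<phi> t)"
    using sum.group[OF finT finFW gT, of \<phi>] by simp
  have S3: "(\<Sum>t\<in>{t \<in> T. g t = f}. \<phi> t) = - Bf p f u w" if f: "f \<in> FW" for f
  proof -
    have fF: "f \<in> F" using f by (simp add: FW_def)
    obtain a b c where abc: "f = {a, b, c}" "a \<noteq> b" "b \<noteq> c" "a \<noteq> c" using face3[OF fF] .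
    define P6 where "P6 = {(a, b, c), (a, c, b), (b, a, c), (b, c, a), (c, a, b), (c, b, a)}"
    have sub: "{t \<in> T. g t = f} \<subseteq> P6"
    proof
      fix t assume "t \<in> {t \<in> T. g t = f}"
      then obtain i j k where t: "t = (i, j, k)" "{i, j, k} \<in> F" "i \<noteq> j" "j \<noteq> k" "i \<noteq> k" "{i, j, k} = {a, b, c}"
        unfolding T_def g_def abc by auto
      show "t \<in> P6" unfolding P6_def t(1) by (rule face_eq3[OF t(2-6)])
    qed
    have zero: "\<phi> t = 0" if "t \<in> P6 - {t \<in> T. g t = f}" for t
    proof -
      obtain i j k where t: "t = (i, j, k)" by (cases t) auto
      have "i \<notin> W"
        using that fF abc unfolding t P6_def T_def g_def by (auto simp: insert_commute)
      thus ?thesis unfolding t \<phi>_def using w0 by simp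
    qed
    have "(\<Sum>t\<in>{t \<in> T. g t = f}. \<phi> t) = (\<Sum>t\<in>P6. \<phi> t)"
      by (rule sum.mono_neutral_left) (use sub zero in \<open>auto simp: P6_def\<close>)
    also have "\<dots> = - Bf p f u w"
      unfolding P6_def abc(1) Bf_expand[OF abc(2-4)] \<phi>_def using abc(2-4)
      by (simp add: theta_sym[of p _ c b] theta_sym[of p _ c a] theta_sym[of p _ b a]) (simp add: field_simps; algebra)
    finally show ?thesis .
  qed
  show ?thesis unfolding S1 S2 using S3 by (simp add: FW_def sum_negf)
qed

end

definition oscf :: "('v \<Rightarrow> real) \<Rightarrow> 'v set \<Rightarrow> real" where
  "oscf h f = Max ((\<lambda>(i, j). \<bar>h i - h j\<bar>) ` (f \<times> f))"

definition mnf :: "('v \<Rightarrow> real) \<Rightarrow> 'v set \<Rightarrow> real" where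
  "mnf h f = Min (h ` f)"

lemma oscf_ge: "finite f \<Longrightarrow> i \<in> f \<Longrightarrow> j \<in> f \<Longrightarrow> \<bar>h i - h j\<bar> \<le> oscf h f"
  unfolding oscf_def by (rule Max_ge) force+

lemma oscf_nonneg: "finite f \<Longrightarrow> f \<noteq> {} \<Longrightarrow> 0 \<le> oscf h f"
  using oscf_ge[of f _ _ h] by fastforce

lemma oscf_le: "finite f \<Longrightarrow> f \<noteq> {} \<Longrightarrow> (\<And>i j. i \<in> f \<Longrightarrow> j \<in> f \<Longrightarrow> \<bar>h i - h j\<bar> \<le> B) \<Longrightarrow> oscf h f \<le> B"
  unfolding oscf_def by (rule Max.boundedI) auto

lemma mnf_le: "finite f \<Longrightarrow> i \<in> f \<Longrightarrow> mnf h f \<le> h i"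
  unfolding mnf_def by simp

lemma mnf_in: "finite f \<Longrightarrow> f \<noteq> {} \<Longrightarrow> \<exists>j\<in>f. mnf h f = h j"
proof -
  assume "finite f" "f \<noteq> {}"
  hence "Min (h ` f) \<in> h ` f" by (intro Min_in) auto
  thus ?thesis unfolding mnf_def by auto
qed

context plane begin

lemma caccioppoli:
  assumes f: "f \<in> F" and eta: "\<And>i. i \<in> f \<Longrightarrow> 0 \<le> \<eta> i \<and> \<eta> i \<le> 1"
    and uM: "\<And>i. i \<in> f \<Longrightarrow> \<bar>u i\<bar> \<le> M"
  shows "(mnf \<eta> f)^2 / 2 * Bf p f u u - 3 * (16 / sin e) * M^2 * (oscf \<eta> f)^2
          \<le> Bf p f u (\<lambda>i. (\<eta> i)^2 * u i)"
proof -
  have fin: "finite f" and ne: "f \<noteq> {}" using face_finite[OF f] face_basic[OF f] by auto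
  define m where "m = mnf \<eta> f"
  define os where "os = oscf \<eta> f"
  define Cb where "Cb = 16 / sin e"
  have Cb0: "Cb > 0" using sin_e by (simp add: Cb_def)
  obtain j0 where j0: "j0 \<in> f" "m = \<eta> j0" using mnf_in[OF fin ne] m_def by blast
  have m0: "0 \<le> m" using eta j0 by simp
  have o0: "0 \<le> os" using oscf_nonneg[OF fin ne] os_def by simp
  have M0: "0 \<le> M" using uM ne by (meson abs_ge_zero all_not_in_conv order_trans)
  have etab: "m \<le> \<eta> i" "\<eta> i \<le> m + os" if "i \<in> f" for i
    using mnf_le[OF fin that, of \<eta>] oscf_ge[OF fin that j0(1), of \<eta>] j0 by (auto simp: m_def os_def)
  define z where "z = (\<lambda>i. ((\<eta> i)^2 - m^2) * u i)"
  have wz: "(\<lambda>i. (\<eta> i)^2 * u i) = (\<lambda>i. m^2 * u i + z i)" by (auto simp: z_def algebra_simps)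
  have lin: "Bf p f u (\<lambda>i. (\<eta> i)^2 * u i) = m^2 * Bf p f u u + Bf p f u z"
    unfolding wz by (rule Bf_props(5)[OF f])
  have zb: "\<bar>z i\<bar> \<le> M * (os * (2 * m + os))" if "i \<in> f" for i
  proof -
    have "0 \<le> (\<eta> i)^2 - m^2" using etab[OF that] m0 by (simp add: power_mono)
    moreover have "(\<eta> i)^2 - m^2 \<le> os * (2 * m + os)"
    proof -
      have "(\<eta> i)^2 \<le> (m + os)^2" using etab[OF that] m0 by (intro power_mono) auto
      thus ?thesis by (simp add: power2_eq_square algebra_simps)
    qed
    ultimately have "\<bar>(\<eta> i)^2 - m^2\<bar> \<le> os * (2 * m + os)" by simp
    hence "\<bar>z i\<bar> \<le> (os * (2 * m + os)) * M"
      unfolding z_def abs_mult using uM[OF that] by (intro mult_mono) auto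
    thus ?thesis by (simp add: mult.commute)
  qed
  define a where "a = sqrt (Bf p f u u)"
  have B0: "0 \<le> Bf p f u u" by (rule Bf_props(1)[OF f])
  hence Buu: "Bf p f u u = a^2" unfolding a_def by simp
  have a0: "0 \<le> a" unfolding a_def using B0 by simp
  have aM: "a \<le> sqrt Cb * M"
  proof -
    have "Bf p f u u \<le> Cb * M^2" unfolding Cb_def using uM by (intro Bf_props(3)[OF f]) auto
    hence "a \<le> sqrt (Cb * M^2)" unfolding a_def by simp
    thus ?thesis using M0 Cb0 by (simp add: real_sqrt_mult)
  qed
  have bz: "sqrt (Bf p f z z) \<le> sqrt Cb * (M * (os * (2 * m + os)))"
  proof -
    have "Bf p f z z \<le> Cb * (M * (os * (2 * m + os)))^2" unfolding Cb_def using zb by (intro Bf_props(3)[OF f]) auto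
    hence "sqrt (Bf p f z z) \<le> sqrt (Cb * (M * (os * (2 * m + os)))^2)" by simp
    thus ?thesis using M0 Cb0 o0 m0 by (simp add: real_sqrt_mult)
  qed
  have "\<bar>Bf p f u z\<bar> \<le> a * sqrt (Bf p f z z)" using Bf_props(2)[OF f, of u z] a_def by simp
  also have "\<dots> \<le> a * (sqrt Cb * (M * (os * (2 * m + os))))" using bz a0 by (intro mult_left_mono) auto
  also have "\<dots> = 2 * (m * a) * (sqrt Cb * M * os) + a * (sqrt Cb * M * os^2)"
    by (simp add: algebra_simps power2_eq_square)
  also have "\<dots> \<le> (1/2 * (m * a)^2 + 2 * (sqrt Cb * M * os)^2) + (sqrt Cb * M) * (sqrt Cb * M * os^2)"
  proof (intro add_mono)
    show "2 * (m * a) * (sqrt Cb * M * os) \<le> 1/2 * (m * a)^2 + 2 * (sqrt Cb * M * os)^2"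
      using sum_squares_ge_zero[of "m * a / 2 - sqrt Cb * M * os" 0]
      by (simp add: power2_eq_square algebra_simps)
    show "a * (sqrt Cb * M * os^2) \<le> sqrt Cb * M * (sqrt Cb * M * os^2)"
      using aM Cb0 M0 by (intro mult_right_mono) auto
  qed
  also have "\<dots> = 1/2 * m^2 * a^2 + 3 * Cb * M^2 * os^2"
    using Cb0 by (simp add: power_mult_distrib algebra_simps power2_eq_square)
  finally have "\<bar>Bf p f u z\<bar> \<le> 1/2 * m^2 * a^2 + 3 * Cb * M^2 * os^2" .
  hence "m^2 / 2 * a^2 - 3 * Cb * M^2 * os^2 \<le> Bf p f u (\<lambda>i. (\<eta> i)^2 * u i)"
  proof -
    have "m^2 * Bf p f u u = m^2 * a^2" using Buu by simp
    thus ?thesis unfolding lin using \<open>\<bar>Bf p f u z\<bar> \<le> 1/2 * m^2 * a^2 + 3 * Cb * M^2 * os^2\<close>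
      abs_ge_minus_self[of "Bf p f u z"] by linarith
  qed
  thus ?thesis using Buu by (simp add: m_def os_def Cb_def)
qed

lemma main_est:
  assumes W: "finite W" "W \<subseteq> V" and eta0: "\<And>i. i \<notin> W \<Longrightarrow> \<eta> i = 0"
    and eta: "\<And>i. i \<in> V \<Longrightarrow> 0 \<le> \<eta> i \<and> \<eta> i \<le> 1"
    and harm: "\<And>i. i \<in> V \<Longrightarrow> Lap u i = 0"
    and uM: "\<And>i. i \<in> V \<Longrightarrow> \<bar>u i\<bar> \<le> M"
    and f0: "f0 \<in> F" "\<And>i. i \<in> f0 \<Longrightarrow> \<eta> i = 1"
  shows "Bf p f0 u u \<le> 6 * (16 / sin e) * M^2 * (\<Sum>f\<in>{f \<in> F. f \<inter> W \<noteq> {}}. (oscf \<eta> f)^2)"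
proof -
  define FW where "FW = {f \<in> F. f \<inter> W \<noteq> {}}"
  define w where "w = (\<lambda>i. (\<eta> i)^2 * u i)"
  have w0: "w i = 0" if "i \<notin> W" for i using eta0[OF that] by (simp add: w_def)
  have "(\<Sum>i\<in>W. w i * Lap u i) = 0" using harm W by (simp add: subset_eq)
  hence sum0: "(\<Sum>f\<in>FW. Bf p f u w) = 0" using green[OF W w0] by (simp add: FW_def)
  have finFW: "finite FW"
  proof -
    have "FW \<subseteq> (\<Union>i\<in>W. {f \<in> F. i \<in> f})" unfolding FW_def by auto
    thus ?thesis using W star_fin by (meson finite_UN_I finite_subset subsetD)
  qed
  have fV: "\<And>f i. f \<in> F \<Longrightarrow> i \<in> f \<Longrightarrow> i \<in> V" using face_basic by blast
  have est: "(mnf \<eta> f)^2 / 2 * Bf p f u u - 3 * (16 / sin e) * M^2 * (oscf \<eta> f)^2 \<le> Bf p f u w"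
    if "f \<in> FW" for f
  proof -
    have fF: "f \<in> F" using that by (simp add: FW_def)
    show ?thesis unfolding w_def
    proof (rule caccioppoli[OF fF])
      fix i assume "i \<in> f"
      hence iV: "i \<in> V" using fV fF by blast
      show "0 \<le> \<eta> i \<and> \<eta> i \<le> 1" by (rule eta[OF iV])
      show "\<bar>u i\<bar> \<le> M" by (rule uM[OF iV])
    qed
  qed
  have "(\<Sum>f\<in>FW. (mnf \<eta> f)^2 / 2 * Bf p f u u - 3 * (16 / sin e) * M^2 * (oscf \<eta> f)^2) \<le> 0"
    using sum_mono[of FW _ "\<lambda>f. Bf p f u w", OF est] sum0 by simp
  hence le: "(\<Sum>f\<in>FW. (mnf \<eta> f)^2 / 2 * Bf p f u u) \<le> 3 * (16 / sin e) * M^2 * (\<Sum>f\<in>FW. (oscf \<eta> f)^2)"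
    by (simp add: sum_subtractf sum_distrib_left)
  have f0W: "f0 \<in> FW"
  proof -
    obtain a b c where "f0 = {a, b, c}" using face3[OF f0(1)] by metis
    hence "a \<in> f0" by simp
    hence "a \<in> W" using f0(2) eta0 by force
    thus ?thesis using f0(1) \<open>a \<in> f0\<close> by (auto simp: FW_def)
  qed
  have m1: "mnf \<eta> f0 = 1"
  proof -
    obtain j where "j \<in> f0" "mnf \<eta> f0 = \<eta> j"
      using mnf_in[OF face_finite[OF f0(1)]] face_basic[OF f0(1)] by fastforce
    thus ?thesis using f0(2) by simp
  qed
  have "(mnf \<eta> f0)^2 / 2 * Bf p f0 u u \<le> (\<Sum>f\<in>FW. (mnf \<eta> f)^2 / 2 * Bf p f u u)"
    by (rule member_le_sum[OF f0W _ finFW]) (use Bf_props(1) in \<open>auto simp: FW_def\<close>)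
  thus ?thesis using le m1 by (simp add: FW_def)
qed

end

lemma closed_UN_locfin:
  fixes S :: "'f \<Rightarrow> 'a::{heine_borel} set"
  assumes lf: "\<And>K. compact K \<Longrightarrow> finite {f \<in> Fs. S f \<inter> K \<noteq> {}}"
    and cl: "\<And>f. f \<in> Fs \<Longrightarrow> closed (S f)"
  shows "closed (\<Union>f\<in>Fs. S f)"
  unfolding closed_sequential_limits
proof (intro allI impI, elim conjE)
  fix x l assume xs: "\<forall>n. x n \<in> (\<Union>f\<in>Fs. S f)" and lim: "x \<longlonglongrightarrow> l"
  define G where "G = {f \<in> Fs. S f \<inter> cball l 1 \<noteq> {}}"
  have finG: "finite G" unfolding G_def by (rule lf) simp
  have clG: "closed (\<Union>f\<in>G. S f)" using finG cl by (intro closed_UN) (auto simp: G_def)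
  have ev: "eventually (\<lambda>n. x n \<in> ball l 1) sequentially"
    using lim by (intro tendstoD[of x l sequentially 1, unfolded dist_commute[of _ l], folded mem_ball]) auto
  have "eventually (\<lambda>n. x n \<in> (\<Union>f\<in>G. S f)) sequentially"
  proof (rule eventually_mono[OF ev])
    fix n assume xb: "x n \<in> ball l 1"
    obtain f where f: "f \<in> Fs" "x n \<in> S f" using xs by auto
    have "x n \<in> cball l 1" using xb by (simp add: less_imp_le)
    hence "f \<in> G" unfolding G_def using f by auto
    thus "x n \<in> (\<Union>f\<in>G. S f)" using f by blast
  qed
  hence "l \<in> (\<Union>f\<in>G. S f)" using Lim_in_closed_set[OF clG _ _ lim] by simp
  thus "l \<in> (\<Union>f\<in>Fs. S f)" unfolding G_def by auto
qed

context plane begin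

abbreviation H where "H f \<equiv> convex hull (p ` f)"

lemma geo_int: "f \<in> F \<Longrightarrow> g \<in> F \<Longrightarrow> H f \<inter> H g = H (f \<inter> g)"
  using geo unfolding geodesic_homeo_def by blast

lemma geo_cover: "\<exists>f\<in>F. z \<in> H f"
  using geo unfolding geodesic_homeo_def by blast

lemma geo_lf: "compact K \<Longrightarrow> finite {f \<in> F. H f \<inter> K \<noteq> {}}"
  using geo unfolding geodesic_homeo_def by blast

lemma geo_inj: "inj_on p V"
  using geo unfolding geodesic_homeo_def by blast

lemma H_closed: "f \<in> F \<Longrightarrow> closed (H f)"
  using face_finite by (intro compact_imp_closed finite_imp_compact_convex_hull) auto

lemma vert_in_H: "i \<in> f \<Longrightarrow> p i \<in> H f"
  by (rule hull_inc) simp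

lemma closed_sub: "closed (\<Union>f\<in>{f \<in> F. P f}. H f)"
  by (rule closed_UN_locfin) (use geo_lf H_closed in \<open>auto intro: finite_subset[OF _ geo_lf]\<close>)

lemma distinct_faces_ball:
  assumes f: "f \<in> F" "g \<in> F" "f \<noteq> g" and r: "r1 > 0" "r2 > 0"
    and b: "ball c1 r1 \<subseteq> H f" "ball c2 r2 \<subseteq> H g"
  shows "ball c1 r1 \<inter> ball c2 r2 = {}"
proof (rule ccontr)
  assume "ball c1 r1 \<inter> ball c2 r2 \<noteq> {}"
  then obtain z where z: "z \<in> ball c1 r1 \<inter> ball c2 r2" by blast
  have "open (ball c1 r1 \<inter> ball c2 r2)" by (intro open_Int open_ball)
  then obtain r where r: "r > 0" "ball z r \<subseteq> ball c1 r1 \<inter> ball c2 r2"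
    using open_contains_ball z by blast
  have sub: "ball z r \<subseteq> H (f \<inter> g)" using r(2) b geo_int[OF f(1,2)] by blast
  have "card (f \<inter> g) \<le> 2"
  proof -
    have "card (f \<inter> g) \<le> 3" using face_basic[OF f(1)] face_finite[OF f(1)] by (metis card_mono inf_le1)
    moreover have "card (f \<inter> g) \<noteq> 3"
    proof
      assume "card (f \<inter> g) = 3"
      hence "f \<inter> g = f" using face_basic[OF f(1)] face_finite[OF f(1)] by (metis card_subset_eq inf_le1)
      moreover have "f \<inter> g = g" using \<open>card (f \<inter> g) = 3\<close> face_basic[OF f(2)] face_finite[OF f(2)]
        by (metis card_subset_eq inf_le2)
      ultimately show False using f(3) by simp
    qed
    ultimately show ?thesis by linarith
  qed
  hence "card (p ` (f \<inter> g)) \<le> 2" by (meson card_image_le face_finite[OF f(1)] finite_Int le_trans)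
  thus False using ball_not_in_small_hull[OF _ _ r(1) sub] face_finite[OF f(1)] by simp
qed

definition star where "star v = (\<Union>f\<in>{f \<in> F. v \<in> f}. H f)"

definition lmin where "lmin v = Min ((\<lambda>j. cmod (p j - p v)) ` nbrs F v)"
definition lmax where "lmax v = Max ((\<lambda>j. cmod (p j - p v)) ` nbrs F v)"

lemma nbrs_fin: "v \<in> V \<Longrightarrow> finite (nbrs F v)"
  using star_union_fin nbrs_sub finite_subset by metis

lemma nbrs_ne: assumes "v \<in> V" shows "nbrs F v \<noteq> {}"
proof -
  obtain f where f: "f \<in> F" "v \<in> f" using surf assms unfolding tri_surface_def by blast
  obtain a b c where abc: "f = {a, b, c}" "a \<noteq> b" "b \<noteq> c" "a \<noteq> c" using face3[OF f(1)] .
  obtain j where "j \<in> f" "j \<noteq> v" using abc f(2) by auto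
  hence "j \<in> nbrs F v" using f by (auto simp: nbrs_iff)
  thus ?thesis by blast
qed

lemma lmin_le: "v \<in> V \<Longrightarrow> j \<in> nbrs F v \<Longrightarrow> lmin v \<le> cmod (p j - p v)"
  unfolding lmin_def using nbrs_fin by simp

lemma lmax_ge: "v \<in> V \<Longrightarrow> j \<in> nbrs F v \<Longrightarrow> cmod (p j - p v) \<le> lmax v"
  unfolding lmax_def using nbrs_fin by simp

lemma lmin_pos: assumes "v \<in> V" shows "0 < lmin v"
proof -
  have "lmin v \<in> (\<lambda>j. cmod (p j - p v)) ` nbrs F v"
    unfolding lmin_def by (rule Min_in) (use nbrs_fin[OF assms] nbrs_ne[OF assms] in auto)
  then obtain j where j: "j \<in> nbrs F v" "lmin v = cmod (p j - p v)" by blast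
  obtain f where f: "f \<in> F" "v \<in> f" "j \<in> f" "v \<noteq> j" using j(1) by (auto simp: nbrs_iff)
  have "j \<in> V" using face_basic f by blast
  hence "p j \<noteq> p v" using geo_inj f face_basic[OF f(1)] assms by (metis inj_onD)
  thus ?thesis using j by simp
qed

lemma lmax_obtain: assumes "v \<in> V" obtains j where "j \<in> nbrs F v" "lmax v = cmod (p j - p v)"
proof -
  have "lmax v \<in> (\<lambda>j. cmod (p j - p v)) ` nbrs F v"
    unfolding lmax_def by (rule Max_in) (use nbrs_fin[OF assms] nbrs_ne[OF assms] in auto)
  thus ?thesis using that by blast
qed

lemma lmin_obtain: assumes "v \<in> V" obtains j where "j \<in> nbrs F v" "lmin v = cmod (p j - p v)"
proof -
  have "lmin v \<in> (\<lambda>j. cmod (p j - p v)) ` nbrs F v"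
    unfolding lmin_def by (rule Min_in) (use nbrs_fin[OF assms] nbrs_ne[OF assms] in auto)
  thus ?thesis using that by blast
qed

lemma opp_far:
  assumes f: "f \<in> F" "v \<in> f" and v: "v \<in> V" and y: "y \<in> H (f - {v})"
  shows "sin e / 2 * lmin v \<le> cmod (y - p v)"
proof -
  obtain j k where jk: "f = {v, j, k}" "v \<noteq> j" "j \<noteq> k" "v \<noteq> k"
  proof -
    obtain a b c where abc: "f = {a, b, c}" "a \<noteq> b" "b \<noteq> c" "a \<noteq> c" using face3[OF f(1)] .
    show ?thesis using abc f(2) that by (auto simp: insert_commute)
  qed
  have fm: "f - {v} = {j, k}" using jk by auto
  have yseg: "y \<in> closed_segment (p j) (p k)" using y unfolding fm by (simp add: segment_convex_hull)
  have F1: "{v, j, k} \<in> F" using f jk by simp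
  have X: "\<bar>cr (p j - p v) (p k - p v)\<bar> \<le> cmod (y - p v) * cmod (p k - p j)" by (rule dist_opp[OF yseg])
  have fat: "sin e * (Dm p f)^2 / 2 \<le> \<bar>cr (p j - p v) (p k - p v)\<bar>" using face_fat[OF F1 jk(2-4)] jk by simp
  have D: "cmod (p k - p j) \<le> Dm p f" using jk face_finite[OF f(1)] by (intro Dm_ge) auto
  have Dp: "0 < Dm p f" by (rule face_Dm_pos[OF f(1)])
  have "sin e * (Dm p f)^2 / 2 \<le> cmod (y - p v) * Dm p f"
    using fat X D by (smt (verit) mult_left_mono norm_ge_zero)
  hence a: "sin e * Dm p f / 2 \<le> cmod (y - p v)" using Dp by (simp add: power2_eq_square field_simps)
  have "j \<in> nbrs F v" using f jk by (auto simp: nbrs_iff)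
  hence "lmin v \<le> Dm p f" using lmin_le[OF v] Dm_ge[OF face_finite[OF f(1)], of j v p] jk
    by (smt (verit) insertI1 insert_commute norm_minus_commute)
  hence "sin e / 2 * lmin v \<le> sin e * Dm p f / 2" using sin_e by (simp add: field_simps mult_left_mono)
  thus ?thesis using a by simp
qed

lemma star_ball: assumes v: "v \<in> V" shows "ball (p v) (sin e / 2 * lmin v) \<subseteq> star v"
proof -
  define B where "B = ball (p v) (sin e / 2 * lmin v)"
  define S2 where "S2 = (\<Union>f\<in>{f \<in> F. v \<notin> f}. H f)"
  have c1: "closed (star v)" unfolding star_def by (rule closed_sub)
  have c2: "closed S2" unfolding S2_def by (rule closed_sub)
  have cov: "B \<subseteq> star v \<union> S2" unfolding star_def S2_def using geo_cover by blast
  have dis: "star v \<inter> S2 \<inter> B = {}"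
  proof (rule ccontr)
    assume "star v \<inter> S2 \<inter> B \<noteq> {}"
    then obtain y f g where y: "f \<in> F" "v \<in> f" "g \<in> F" "v \<notin> g" "y \<in> H f" "y \<in> H g" "y \<in> B"
      unfolding star_def S2_def by blast
    have "y \<in> H (f \<inter> g)" using geo_int[OF y(1,3)] y(5,6) by blast
    moreover have "H (f \<inter> g) \<subseteq> H (f - {v})" using y(4) by (intro hull_mono image_mono) auto
    ultimately have "sin e / 2 * lmin v \<le> cmod (y - p v)" using opp_far[OF y(1,2) v] by blast
    thus False using y(7) unfolding B_def by (simp add: dist_norm norm_minus_commute)
  qed
  have ne: "star v \<inter> B \<noteq> {}"
  proof -
    obtain f where "f \<in> F" "v \<in> f" using surf v unfolding tri_surface_def by blast
    hence "p v \<in> star v" unfolding star_def using vert_in_H by blast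
    moreover have "p v \<in> B" unfolding B_def using sin_e lmin_pos[OF v] by simp
    ultimately show ?thesis by blast
  qed
  have "star v \<inter> B = {} \<or> S2 \<inter> B = {}"
    by (rule connected_closedD[OF _ dis cov c1 c2]) (simp add: B_def)
  hence "S2 \<inter> B = {}" using ne by blast
  thus ?thesis using cov unfolding B_def by blast
qed

end

lemma cr_scale: "cr (a *\<^sub>R z) (b *\<^sub>R w) = a * b * cr z w"
  unfolding cr_def by (simp add: algebra_simps)

context plane begin

definition Nd where "Nd = nat \<lceil>(24 / sin e)^2\<rceil>"

lemma degree_bound: assumes v: "v \<in> V" shows "card {f \<in> F. v \<in> f} \<le> Nd"
proof -
  define I where "I = {f \<in> F. v \<in> f}"
  define \<delta> where "\<delta> = lmin v"
  have d0: "\<delta> > 0" using lmin_pos[OF v] by (simp add: \<delta>_def)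
  define u where "u = (\<lambda>j. (\<delta> / cmod (p j - p v)) *\<^sub>R (p j - p v))"
  define c where "c = (\<lambda>f. p v + (1/3) *\<^sub>R (\<Sum>j\<in>f - {v}. u j))"
  define r where "r = \<delta> * sin e / 12"
  have r0: "r > 0" using d0 sin_e by (simp add: r_def)
  have key: "ball (c f) r \<subseteq> H f \<and> ball (c f) r \<subseteq> ball (p v) (2 * \<delta>)" if f: "f \<in> I" for f
  proof -
    have fF: "f \<in> F" "v \<in> f" using f by (auto simp: I_def)
    obtain j k where jk: "f = {v, j, k}" "v \<noteq> j" "j \<noteq> k" "v \<noteq> k"
    proof -
      obtain a b c where abc: "f = {a, b, c}" "a \<noteq> b" "b \<noteq> c" "a \<noteq> c" using face3[OF fF(1)] .
      show ?thesis using abc fF(2) that by (auto simp: insert_commute)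
    qed
    have F1: "{v, j, k} \<in> F" using fF jk by simp
    have jn: "j \<in> nbrs F v" "k \<in> nbrs F v" using fF jk by (auto simp: nbrs_iff)
    define l1 where "l1 = cmod (p j - p v)"
    define l2 where "l2 = cmod (p k - p v)"
    have l1: "\<delta> \<le> l1" "\<delta> \<le> l2" using lmin_le[OF v jn(1)] lmin_le[OF v jn(2)] by (auto simp: \<delta>_def l1_def l2_def)
    have l0: "0 < l1" "0 < l2" using l1 d0 by auto
    define B' where "B' = p v + u j"
    define C' where "C' = p v + u k"
    have cf: "c f = (p v + B' + C') / 3"
    proof -
      have "f - {v} = {j, k}" using jk by auto
      hence "(\<Sum>j\<in>f - {v}. u j) = u j + u k" using jk by simp
      hence "c f = p v + (1/3) *\<^sub>R (u j + u k)" unfolding c_def by simp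
      also have "\<dots> = (p v + B' + C') / 3" unfolding B'_def C'_def
        by (simp add: complex_eq_iff field_simps)
      finally show ?thesis .
    qed
    have nB: "cmod (B' - p v) = \<delta>" "cmod (C' - p v) = \<delta>"
      unfolding B'_def C'_def u_def using l0 d0 by (simp_all add: l1_def l2_def)
    have nBC: "cmod (C' - B') \<le> 2 * \<delta>"
    proof -
      have "C' - B' = (C' - p v) - (B' - p v)" by simp
      hence "cmod (C' - B') \<le> cmod (C' - p v) + cmod (B' - p v)" using norm_triangle_ineq4 by metis
      thus ?thesis using nB by simp
    qed
    have X: "cr (B' - p v) (C' - p v) = (\<delta> / l1) * (\<delta> / l2) * cr (p j - p v) (p k - p v)"
      unfolding B'_def C'_def u_def by (simp add: cr_scale l1_def l2_def)
    have fat: "sin e * (Dm p f)^2 / 2 \<le> \<bar>cr (p j - p v) (p k - p v)\<bar>"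
      using face_fat[OF F1 jk(2-4)] jk by simp
    have Dl: "l1 \<le> Dm p f" "l2 \<le> Dm p f" unfolding l1_def l2_def
      using jk face_finite[OF fF(1)] by (auto intro!: Dm_ge)
    have "l1 * l2 \<le> (Dm p f)^2" using Dl l0 by (simp add: power2_eq_square mult_mono)
    hence "sin e * (l1 * l2) / 2 \<le> sin e * (Dm p f)^2 / 2"
      using sin_e by (intro divide_right_mono mult_left_mono) auto
    hence f2: "sin e * (l1 * l2) / 2 \<le> \<bar>cr (p j - p v) (p k - p v)\<bar>" using fat by linarith
    have q0: "0 \<le> (\<delta> / l1) * (\<delta> / l2)" using l0 d0 by simp
    have "(\<delta> / l1) * (\<delta> / l2) * (sin e * (l1 * l2) / 2) \<le> (\<delta> / l1) * (\<delta> / l2) * \<bar>cr (p j - p v) (p k - p v)\<bar>"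
      using f2 q0 by (rule mult_left_mono)
    moreover have "(\<delta> / l1) * (\<delta> / l2) * (sin e * (l1 * l2) / 2) = sin e * \<delta>^2 / 2"
      using l0 by (simp add: field_simps power2_eq_square)
    moreover have "(\<delta> / l1) * (\<delta> / l2) * \<bar>cr (p j - p v) (p k - p v)\<bar> = \<bar>cr (B' - p v) (C' - p v)\<bar>"
      unfolding X using q0 l0 by (simp add: abs_mult)
    ultimately have Xb: "sin e * \<delta>^2 / 2 \<le> \<bar>cr (B' - p v) (C' - p v)\<bar>" by linarith
    have "0 < sin e * \<delta>^2 / 2" using sin_e d0 by simp
    hence X0: "cr (B' - p v) (C' - p v) \<noteq> 0" using Xb by auto
    have disk: "ball ((p v + B' + C') / 3) (\<bar>cr (B' - p v) (C' - p v)\<bar> / (3 * (2 * \<delta>))) \<subseteq> convex hull {p v, B', C'}"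
      by (rule disk_in_tri[OF X0]) (use nB nBC in \<open>auto simp: norm_minus_commute\<close>)
    have "r = (sin e * \<delta>^2 / 2) / (3 * (2 * \<delta>))" unfolding r_def using d0 by (simp add: field_simps power2_eq_square)
    also have "\<dots> \<le> \<bar>cr (B' - p v) (C' - p v)\<bar> / (3 * (2 * \<delta>))"
      using Xb d0 by (intro divide_right_mono) auto
    finally have rle: "r \<le> \<bar>cr (B' - p v) (C' - p v)\<bar> / (3 * (2 * \<delta>))" .
    have "ball (c f) r \<subseteq> ball ((p v + B' + C') / 3) (\<bar>cr (B' - p v) (C' - p v)\<bar> / (3 * (2 * \<delta>)))"
      unfolding cf using rle by (rule subset_ball)
    hence b1: "ball (c f) r \<subseteq> convex hull {p v, B', C'}" using disk by (rule order_trans)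
    have segB: "B' \<in> closed_segment (p v) (p j)"
    proof -
      have "B' = (1 - \<delta>/l1) *\<^sub>R p v + (\<delta>/l1) *\<^sub>R p j" unfolding B'_def u_def l1_def by (simp add: algebra_simps)
      thus ?thesis using l1 l0 d0 unfolding in_segment by (intro conjI exI[of _ "\<delta>/l1"]) auto
    qed
    have segC: "C' \<in> closed_segment (p v) (p k)"
    proof -
      have "C' = (1 - \<delta>/l2) *\<^sub>R p v + (\<delta>/l2) *\<^sub>R p k" unfolding C'_def u_def l2_def by (simp add: algebra_simps)
      thus ?thesis using l1 l0 d0 unfolding in_segment by (intro conjI exI[of _ "\<delta>/l2"]) auto
    qed
    have mem: "v \<in> f" "j \<in> f" "k \<in> f" using jk by auto
    have inH: "p v \<in> H f" "p j \<in> H f" "p k \<in> H f"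
      using vert_in_H[OF mem(1)] vert_in_H[OF mem(2)] vert_in_H[OF mem(3)] by auto
    have "convex hull {p v, B', C'} \<subseteq> H f"
      by (rule hull_minimal) (use inH segB segC closed_segment_subset[of _ "H f"] in auto)
    moreover have "convex hull {p v, B', C'} \<subseteq> ball (p v) (2 * \<delta>)"
    proof -
      have "convex hull {p v, B', C'} \<subseteq> cball (p v) \<delta>"
        by (rule hull_minimal) (use nB d0 in \<open>auto simp: dist_norm norm_minus_commute\<close>)
      moreover have "cball (p v) \<delta> \<subseteq> ball (p v) (2 * \<delta>)" using d0 by (auto simp: subset_eq)
      ultimately show ?thesis by (rule order_trans)
    qed
    ultimately show ?thesis using b1 by blast
  qed
  have finI: "finite I" using star_fin[OF v] by (simp add: I_def)
  have "(\<Sum>f\<in>I. r^2) \<le> (2 * \<delta>)^2"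
  proof (rule packing[OF finI])
    show "\<And>f. f \<in> I \<Longrightarrow> 0 < r" using r0 by simp
    show "\<And>f. f \<in> I \<Longrightarrow> ball (c f) r \<subseteq> ball (p v) (2 * \<delta>)" using key by blast
    show "\<And>f g. f \<in> I \<Longrightarrow> g \<in> I \<Longrightarrow> f \<noteq> g \<Longrightarrow> ball (c f) r \<inter> ball (c g) r = {}"
    proof -
      fix f g assume fg: "f \<in> I" "g \<in> I" "f \<noteq> g"
      show "ball (c f) r \<inter> ball (c g) r = {}"
        by (rule distinct_faces_ball[of f g]) (use fg key r0 in \<open>auto simp: I_def\<close>)
    qed
  qed
  hence "real (card I) * r^2 \<le> 4 * \<delta>^2" by (simp add: power_mult_distrib)
  hence "real (card I) \<le> 4 * \<delta>^2 / r^2" using r0 by (simp add: field_simps)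
  also have "\<dots> = (24 / sin e)^2" using d0 sin_e unfolding r_def by (simp add: field_simps power2_eq_square)
  finally have "real (card I) \<le> (24 / sin e)^2" .
  hence "card I \<le> Nd" unfolding Nd_def by linarith
  thus ?thesis by (simp add: I_def)
qed

definition Kq where "Kq = 2 / sin e"

lemma Kq1: "1 \<le> Kq"
proof -
  have "sin e \<le> 2" using sin_e by linarith
  thus ?thesis unfolding Kq_def using le_divide_eq_1_pos[OF sin_e(1), of 2] by blast
qed

lemma link_step: assumes "link_rel F v j k"
  shows "cmod (p j - p v) \<le> Kq * cmod (p k - p v)"
proof -
  have F1: "{v, j, k} \<in> F" "j \<noteq> k" "j \<noteq> v" "k \<noteq> v" using assms by (auto simp: link_rel_def)
  have s: "sin e * Dm p {v, j, k} / 2 \<le> cmod (p k - p v)"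
    using face_side[OF F1(1), of v k] F1 by auto
  have "cmod (p j - p v) \<le> Dm p {v, j, k}" by (rule Dm_ge) auto
  thus ?thesis using s sin_e unfolding Kq_def by (simp add: field_simps) (smt (verit) mult_left_mono)
qed

lemma link_pow: assumes "(j, k) \<in> {(j, k). link_rel F v j k} ^^ n"
  shows "cmod (p j - p v) \<le> Kq ^ n * cmod (p k - p v)"
  using assms
proof (induction n arbitrary: k)
  case 0 thus ?case by simp
next
  case (Suc n)
  then obtain m where m: "(j, m) \<in> {(j, k). link_rel F v j k} ^^ n" "link_rel F v m k" by auto
  have "cmod (p j - p v) \<le> Kq ^ n * cmod (p m - p v)" using Suc.IH[OF m(1)] .
  also have "\<dots> \<le> Kq ^ n * (Kq * cmod (p k - p v))"
    using link_step[OF m(2)] Kq1 by (intro mult_left_mono) auto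
  finally show ?case by (simp add: algebra_simps)
qed

definition Nr where "Nr = (3 * Nd)^2"

lemma lmax_lmin: assumes v: "v \<in> V" shows "lmax v \<le> Kq ^ Nr * lmin v"
proof -
  obtain jx where jx: "jx \<in> nbrs F v" "lmax v = cmod (p jx - p v)" using lmax_obtain[OF v] .
  obtain jn where jn: "jn \<in> nbrs F v" "lmin v = cmod (p jn - p v)" using lmin_obtain[OF v] .
  have inlink: "j \<in> link_vertices F v" if jn: "j \<in> nbrs F v" for j
  proof -
    obtain f where f: "f \<in> F" "v \<in> f" "j \<in> f" "v \<noteq> j" using jn by (auto simp: nbrs_iff)
    obtain a b c where abc: "f = {a, b, c}" "a \<noteq> b" "b \<noteq> c" "a \<noteq> c" using face3[OF f(1)] .
    obtain k where k: "f = {v, j, k}" "k \<noteq> v" "k \<noteq> j" using abc f by (auto simp: insert_commute)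
    hence "link_rel F v j k" using f by (auto simp: link_rel_def)
    thus ?thesis by (auto simp: link_vertices_def)
  qed
  have conn: "(link_rel F v)\<^sup>*\<^sup>* jx jn"
    using surf v inlink[OF jx(1)] inlink[OF jn(1)] unfolding tri_surface_def by blast
  define R where "R = {(j, k). link_rel F v j k}"
  have "(jx, jn) \<in> R\<^sup>*" using conn
  proof (induction rule: rtranclp_induct)
    case base thus ?case by simp
  next
    case (step y z) thus ?case by (auto simp: R_def intro: rtrancl_into_rtrancl)
  qed
  define L where "L = \<Union>{f \<in> F. v \<in> f}"
  have RL: "R \<subseteq> L \<times> L" unfolding R_def L_def link_rel_def by auto
  have finL: "finite L" using star_union_fin[OF v] by (simp add: L_def)
  have cardL: "card L \<le> 3 * Nd"
  proof -
    have "card L \<le> (\<Sum>f\<in>{f \<in> F. v \<in> f}. card f)" unfolding L_def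
      using card_Union_le_sum_card[of "{f \<in> F. v \<in> f}"] by simp
    also have "\<dots> = (\<Sum>f\<in>{f \<in> F. v \<in> f}. 3)" using face_basic by (intro sum.cong) auto
    also have "\<dots> = 3 * card {f \<in> F. v \<in> f}" by simp
    also have "\<dots> \<le> 3 * Nd" using degree_bound[OF v] by simp
    finally show ?thesis .
  qed
  have finR: "finite R" using RL finL by (meson finite_SigmaI finite_subset)
  have cardR: "card R \<le> Nr"
  proof -
    have "card R \<le> card (L \<times> L)" using RL finL by (intro card_mono) auto
    also have "\<dots> = card L * card L" by (simp add: card_cartesian_product)
    also have "\<dots> \<le> (3 * Nd) * (3 * Nd)" using cardL by (intro mult_le_mono) auto
    finally show ?thesis by (simp add: Nr_def power2_eq_square)
  qed
  obtain n where n: "n \<le> card R" "(jx, jn) \<in> R ^^ n"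
    using \<open>(jx, jn) \<in> R\<^sup>*\<close> rtrancl_finite_eq_relpow[OF finR] by auto
  have "lmax v \<le> Kq ^ n * lmin v" using link_pow[where j=jx and k=jn and v=v and n=n] n(2) jx jn by (simp add: R_def)
  also have "\<dots> \<le> Kq ^ Nr * lmin v"
    using n(1) cardR Kq1 lmin_pos[OF v] by (intro mult_right_mono power_increasing) auto
  finally show ?thesis .
qed

end

context plane begin

definition F0 where "F0 = {f \<in> F. 0 \<in> H f}"
definition R0 where "R0 = Max (insert 0 ((\<lambda>i. cmod (p i)) ` \<Union>F0))"
definition K1 where "K1 = Kq ^ Nr * (2 / sin e)"

lemma F0_fin: "finite F0"
proof -
  have "F0 = {f \<in> F. H f \<inter> {0} \<noteq> {}}" unfolding F0_def by auto
  thus ?thesis using geo_lf[of "{0}"] by simp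
qed

lemma UF0_fin: "finite (\<Union>F0)"
  using F0_fin face_finite unfolding F0_def by auto

lemma R0_ge: "f \<in> F0 \<Longrightarrow> i \<in> f \<Longrightarrow> cmod (p i) \<le> R0"
  unfolding R0_def using UF0_fin by (intro Max_ge) auto

lemma R0_nonneg: "0 \<le> R0"
  unfolding R0_def using UF0_fin by (intro Max_ge) auto

lemma K1_pos: "0 < K1"
  unfolding K1_def using Kq1 sin_e by simp

lemma far_lmax: assumes v: "v \<in> V" and r: "R0 < cmod (p v)"
  shows "lmax v \<le> K1 * cmod (p v)"
proof -
  have "0 \<notin> star v"
  proof
    assume "0 \<in> star v"
    then obtain f where "f \<in> F" "v \<in> f" "0 \<in> H f" unfolding star_def by blast
    hence "cmod (p v) \<le> R0" using R0_ge[of f v] unfolding F0_def by blast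
    thus False using r by simp
  qed
  hence "0 \<notin> ball (p v) (sin e / 2 * lmin v)" using star_ball[OF v] by blast
  hence "sin e / 2 * lmin v \<le> cmod (p v)" by (simp add: dist_norm)
  hence lm: "lmin v \<le> 2 / sin e * cmod (p v)" using sin_e by (simp add: field_simps)
  have "lmax v \<le> Kq ^ Nr * lmin v" by (rule lmax_lmin[OF v])
  also have "\<dots> \<le> Kq ^ Nr * (2 / sin e * cmod (p v))"
    using lm Kq1 by (intro mult_left_mono) auto
  finally show ?thesis by (simp add: K1_def algebra_simps)
qed

lemma far_face:
  assumes f: "f \<in> F" and all: "\<And>x. x \<in> f \<Longrightarrow> R0 < cmod (p x)" and y: "y \<in> f"
  shows "Dm p f \<le> 2 * K1 * cmod (p y)" "\<And>x. x \<in> f \<Longrightarrow> cmod (p x) \<le> (1 + K1) * cmod (p y)"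
proof -
  have yV: "y \<in> V" using face_basic f y by blast
  have e1: "cmod (p x - p y) \<le> K1 * cmod (p y)" if x: "x \<in> f" for x
  proof (cases "x = y")
    case True thus ?thesis using K1_pos by simp
  next
    case False
    hence "x \<in> nbrs F y" using f x y by (auto simp: nbrs_iff)
    hence "cmod (p x - p y) \<le> lmax y" by (rule lmax_ge[OF yV])
    also have "\<dots> \<le> K1 * cmod (p y)" by (rule far_lmax[OF yV all[OF y]])
    finally show ?thesis .
  qed
  show "Dm p f \<le> 2 * K1 * cmod (p y)"
    unfolding Dm_def
  proof (rule Max.boundedI)
    show "finite ((\<lambda>(i, j). cmod (p i - p j)) ` (f \<times> f))" using face_finite[OF f] by simp
    show "(\<lambda>(i, j). cmod (p i - p j)) ` (f \<times> f) \<noteq> {}" using y by auto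
    fix d assume "d \<in> (\<lambda>(i, j). cmod (p i - p j)) ` (f \<times> f)"
    then obtain a b where ab: "a \<in> f" "b \<in> f" "d = cmod (p a - p b)" by auto
    have "cmod (p a - p b) \<le> cmod (p a - p y) + cmod (p b - p y)"
    proof -
      have "p a - p b = (p a - p y) - (p b - p y)" by simp
      thus ?thesis using norm_triangle_ineq4 by metis
    qed
    thus "d \<le> 2 * K1 * cmod (p y)" using e1[OF ab(1)] e1[OF ab(2)] ab(3) by simp
  qed
  fix x assume x: "x \<in> f"
  have "cmod (p x) \<le> cmod (p x - p y) + cmod (p y)" by (metis diff_add_cancel norm_triangle_ineq)
  thus "cmod (p x) \<le> (1 + K1) * cmod (p y)" using e1[OF x] by (simp add: algebra_simps)
qed

definition F1 where "F1 = {f \<in> F. H f \<inter> cball 0 R0 \<noteq> {}}"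
definition R1 where "R1 = Max (insert R0 ((\<lambda>i. cmod (p i)) ` \<Union>F1))"

lemma UF1_fin: "finite (\<Union>F1)"
  using geo_lf[of "cball 0 R0"] face_finite unfolding F1_def by auto

lemma small_face:
  assumes f: "f \<in> F" and y: "y \<in> f" "cmod (p y) \<le> R0" and x: "x \<in> f"
  shows "cmod (p x) \<le> R1"
proof -
  have "p y \<in> H f \<inter> cball 0 R0" using vert_in_H[OF y(1)] y(2) by simp
  hence "f \<in> F1" using f unfolding F1_def by blast
  thus ?thesis unfolding R1_def using UF1_fin x by (intro Max_ge) auto
qed

lemma R0_le_R1: "R0 \<le> R1"
  unfolding R1_def using UF1_fin by (intro Max_ge) auto

definition cen where "cen f = (\<Sum>i\<in>f. p i) / 3"

lemma face_disk: assumes f: "f \<in> F" shows "ball (cen f) (sin e * Dm p f / 6) \<subseteq> H f"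
proof -
  obtain a b c where abc: "f = {a, b, c}" "a \<noteq> b" "b \<noteq> c" "a \<noteq> c" using face3[OF f] .
  have F1: "{a, b, c} \<in> F" using f abc by simp
  have X: "cr (p b - p a) (p c - p a) \<noteq> 0" by (rule face_cr[OF F1 abc(2-4)])
  have D: "cmod (p b - p a) \<le> Dm p f" "cmod (p c - p b) \<le> Dm p f" "cmod (p a - p c) \<le> Dm p f"
    using face_finite[OF f] abc by (auto intro!: Dm_ge)
  have disk: "ball ((p a + p b + p c) / 3) (\<bar>cr (p b - p a) (p c - p a)\<bar> / (3 * Dm p f)) \<subseteq> convex hull {p a, p b, p c}"
    by (rule disk_in_tri[OF X D])
  have Dp: "0 < Dm p f" by (rule face_Dm_pos[OF f])
  have fat: "sin e * (Dm p f)^2 / 2 \<le> \<bar>cr (p b - p a) (p c - p a)\<bar>" using face_fat[OF F1 abc(2-4)] abc by simp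
  have "sin e * Dm p f / 6 = (sin e * (Dm p f)^2 / 2) / (3 * Dm p f)" using Dp by (simp add: field_simps power2_eq_square)
  also have "\<dots> \<le> \<bar>cr (p b - p a) (p c - p a)\<bar> / (3 * Dm p f)" using fat Dp by (intro divide_right_mono) auto
  finally have rl: "sin e * Dm p f / 6 \<le> \<bar>cr (p b - p a) (p c - p a)\<bar> / (3 * Dm p f)" .
  have c: "cen f = (p a + p b + p c) / 3" unfolding cen_def abc(1) using abc by (simp add: add.assoc)
  have "ball (cen f) (sin e * Dm p f / 6) \<subseteq> ball ((p a + p b + p c) / 3) (\<bar>cr (p b - p a) (p c - p a)\<bar> / (3 * Dm p f))"
    unfolding c using rl by (rule subset_ball)
  also have "\<dots> \<subseteq> H f" using disk abc(1) by simp
  finally show ?thesis .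
qed

lemma H_in_ball: assumes f: "f \<in> F" and b: "\<And>x. x \<in> f \<Longrightarrow> cmod (p x) < A" shows "H f \<subseteq> ball 0 A"
  by (rule hull_minimal) (use b in auto)

end

definition clamp :: "real \<Rightarrow> real" where "clamp a = max 0 (min 1 a)"
definition gc :: "real \<Rightarrow> real \<Rightarrow> real" where "gc s r = clamp (2 - r / s)"

lemma clamp_lip: "\<bar>clamp a - clamp b\<bar> \<le> \<bar>a - b\<bar>"
  unfolding clamp_def by (simp add: max_def min_def abs_if)

lemma gc_bounds: "0 \<le> gc s r" "gc s r \<le> 1"
  unfolding gc_def clamp_def by auto

lemma gc_one: "0 < s \<Longrightarrow> r \<le> s \<Longrightarrow> gc s r = 1"
  unfolding gc_def clamp_def by (simp add: field_simps)

lemma gc_zero: "0 < s \<Longrightarrow> 2 * s \<le> r \<Longrightarrow> gc s r = 0"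
  unfolding gc_def clamp_def by (simp add: field_simps)

lemma gc_lip: assumes "0 < s" shows "\<bar>gc s r1 - gc s r2\<bar> \<le> \<bar>r1 - r2\<bar> / s"
proof -
  have "\<bar>gc s r1 - gc s r2\<bar> \<le> \<bar>(2 - r1 / s) - (2 - r2 / s)\<bar>" unfolding gc_def by (rule clamp_lip)
  also have "\<dots> = \<bar>(r2 - r1) / s\<bar>" by (simp add: diff_divide_distrib)
  also have "\<dots> = \<bar>r1 - r2\<bar> / s" using assms by (simp add: abs_div abs_minus_commute)
  finally show ?thesis .
qed

context plane begin

lemma face_ne: "f \<in> F \<Longrightarrow> f \<noteq> {}"
  using face_basic by fastforce

definition Cp where "Cp = 144 * (1 + K1)^2 / (sin e)^2"

lemma osc_nz:
  assumes f: "f \<in> F" and s: "R1 < s" and nz: "oscf (\<lambda>i. gc s (cmod (p i))) f \<noteq> 0"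
  shows "\<exists>x\<in>f. s < cmod (p x)" "\<exists>y\<in>f. cmod (p y) < 2 * s" "\<And>x. x \<in> f \<Longrightarrow> R0 < cmod (p x)"
proof -
  have fin: "finite f" and ne: "f \<noteq> {}" using face_finite[OF f] face_basic[OF f] by auto
  have s0: "0 < s" using s R0_le_R1 R0_nonneg by linarith
  show ex: "\<exists>x\<in>f. s < cmod (p x)"
  proof (rule ccontr)
    assume "\<not> ?thesis"
    hence "\<And>i. i \<in> f \<Longrightarrow> gc s (cmod (p i)) = 1" using gc_one[OF s0] by (meson not_less)
    hence "oscf (\<lambda>i. gc s (cmod (p i))) f \<le> 0" by (intro oscf_le[OF fin ne]) auto
    thus False using nz oscf_nonneg[OF fin ne] by (meson order.antisym)
  qed
  show "\<exists>y\<in>f. cmod (p y) < 2 * s"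
  proof (rule ccontr)
    assume "\<not> ?thesis"
    hence "\<And>i. i \<in> f \<Longrightarrow> gc s (cmod (p i)) = 0" using gc_zero[OF s0] by (meson not_less)
    hence "oscf (\<lambda>i. gc s (cmod (p i))) f \<le> 0" by (intro oscf_le[OF fin ne]) auto
    thus False using nz oscf_nonneg[OF fin ne] by (meson order.antisym)
  qed
  fix x assume x: "x \<in> f"
  show "R0 < cmod (p x)"
  proof (rule ccontr)
    assume "\<not> R0 < cmod (p x)"
    hence "\<And>z. z \<in> f \<Longrightarrow> cmod (p z) \<le> R1" using small_face[OF f x] by simp
    thus False using ex s by force
  qed
qed

lemma osc_le_Dm:
  assumes f: "f \<in> F" and s0: "0 < s"
  shows "oscf (\<lambda>i. gc s (cmod (p i))) f \<le> Dm p f / s"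
proof (rule oscf_le)
  show "finite f" "f \<noteq> {}" using face_finite[OF f] face_basic[OF f] by auto
  fix i j assume ij: "i \<in> f" "j \<in> f"
  have "\<bar>gc s (cmod (p i)) - gc s (cmod (p j))\<bar> \<le> \<bar>cmod (p i) - cmod (p j)\<bar> / s" by (rule gc_lip[OF s0])
  also have "\<dots> \<le> cmod (p i - p j) / s" using s0 by (intro divide_right_mono norm_triangle_ineq3) auto
  also have "\<dots> \<le> Dm p f / s" using s0 Dm_ge[OF face_finite[OF f] ij] by (intro divide_right_mono) auto
  finally show "\<bar>gc s (cmod (p i)) - gc s (cmod (p j))\<bar> \<le> Dm p f / s" .
qed

lemma level_bound:
  assumes FS: "finite FS" "FS \<subseteq> F" and s: "R1 < s"
  shows "(\<Sum>f\<in>FS. (oscf (\<lambda>i. gc s (cmod (p i))) f)^2) \<le> Cp"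
proof -
  define on where "on = (\<lambda>f. oscf (\<lambda>i. gc s (cmod (p i))) f)"
  define S where "S = {f \<in> FS. on f \<noteq> 0}"
  define K3 where "K3 = 1 + K1"
  have K3: "0 < K3" using K1_pos by (simp add: K3_def)
  have s0: "0 < s" using s R0_le_R1 R0_nonneg by linarith
  have finS: "finite S" using FS by (simp add: S_def)
  have SF: "S \<subseteq> F" using FS by (auto simp: S_def)
  have eq: "(\<Sum>f\<in>FS. (on f)^2) = (\<Sum>f\<in>S. (on f)^2)"
    by (rule sum.mono_neutral_right) (use FS in \<open>auto simp: S_def\<close>)
  have hprop: "Dm p f \<le> 2 * K1 * (2 * s) \<and> ball (cen f) (sin e * Dm p f / 6) \<subseteq> ball 0 (K3 * (2 * s))"
    if fS: "f \<in> S" for f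
  proof -
    have fF: "f \<in> F" and nz: "on f \<noteq> 0" using fS SF by (auto simp: S_def)
    obtain y where y: "y \<in> f" "cmod (p y) < 2 * s" using osc_nz(2)[OF fF s] nz on_def by blast
    have all: "\<And>x. x \<in> f \<Longrightarrow> R0 < cmod (p x)" using osc_nz(3)[OF fF s] nz on_def by blast
    have "Dm p f \<le> 2 * K1 * cmod (p y)" by (rule far_face(1)[OF fF all y(1)])
    also have "\<dots> \<le> 2 * K1 * (2 * s)" using y(2) K1_pos by simp
    finally have D: "Dm p f \<le> 2 * K1 * (2 * s)" .
    have "\<And>x. x \<in> f \<Longrightarrow> cmod (p x) < K3 * (2 * s)"
    proof -
      fix x assume "x \<in> f"
      hence "cmod (p x) \<le> K3 * cmod (p y)" using far_face(2)[OF fF all y(1)] by (simp add: K3_def)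
      also have "\<dots> < K3 * (2 * s)" using y(2) K3 by simp
      finally show "cmod (p x) < K3 * (2 * s)" .
    qed
    hence "H f \<subseteq> ball 0 (K3 * (2 * s))" by (rule H_in_ball[OF fF])
    thus ?thesis using face_disk[OF fF] D by blast
  qed
  have pack: "(\<Sum>f\<in>S. (sin e * Dm p f / 6)^2) \<le> (K3 * (2 * s))^2"
  proof (rule packing[OF finS])
    fix f assume "f \<in> S"
    hence "0 < Dm p f" using face_Dm_pos SF by blast
    thus "0 < sin e * Dm p f / 6" using sin_e by simp
  next
    fix f assume "f \<in> S"
    thus "ball (cen f) (sin e * Dm p f / 6) \<subseteq> ball 0 (K3 * (2 * s))" using hprop by blast
  next
    fix f g assume fg: "f \<in> S" "g \<in> S" "f \<noteq> g"
    have fF: "f \<in> F" "g \<in> F" using fg SF by auto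
    have r: "0 < sin e * Dm p f / 6" "0 < sin e * Dm p g / 6"
      using sin_e face_Dm_pos[OF fF(1)] face_Dm_pos[OF fF(2)] by auto
    show "ball (cen f) (sin e * Dm p f / 6) \<inter> ball (cen g) (sin e * Dm p g / 6) = {}"
      by (rule distinct_faces_ball[OF fF fg(3) r face_disk[OF fF(1)] face_disk[OF fF(2)]])
  qed
  have "(\<Sum>f\<in>S. (on f)^2) \<le> (\<Sum>f\<in>S. (36 / ((sin e)^2 * s^2)) * (sin e * Dm p f / 6)^2)"
  proof (rule sum_mono)
    fix f assume fS: "f \<in> S"
    hence fF: "f \<in> F" using SF by auto
    have "0 \<le> on f" unfolding on_def by (rule oscf_nonneg[OF face_finite[OF fF] face_ne[OF fF]])
    hence "(on f)^2 \<le> (Dm p f / s)^2" using osc_le_Dm[OF fF s0] on_def by (intro power_mono) auto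
    also have "\<dots> = (36 / ((sin e)^2 * s^2)) * (sin e * Dm p f / 6)^2"
    proof -
      have a: "(sin e * Dm p f / 6)^2 = (sin e)^2 * (Dm p f)^2 / 36" by (simp add: power_divide power_mult_distrib)
      have b: "36 / ((sin e)^2 * s^2) * ((sin e)^2 * (Dm p f)^2 / 36) = (Dm p f)^2 / s^2"
        using sin_e s0 by (simp add: field_simps)
      show ?thesis unfolding a b by (simp add: power_divide)
    qed
    finally show "(on f)^2 \<le> (36 / ((sin e)^2 * s^2)) * (sin e * Dm p f / 6)^2" .
  qed
  also have "\<dots> = (36 / ((sin e)^2 * s^2)) * (\<Sum>f\<in>S. (sin e * Dm p f / 6)^2)" by (simp add: sum_distrib_left)
  also have "\<dots> \<le> (36 / ((sin e)^2 * s^2)) * (K3 * (2 * s))^2"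
    using pack by (intro mult_left_mono) auto
  also have "\<dots> = Cp"
  proof -
    have a: "(K3 * (2 * s))^2 = 4 * K3^2 * s^2" by (simp add: power_mult_distrib)
    have b: "36 / ((sin e)^2 * s^2) * (4 * K3^2 * s^2) = 144 * K3^2 / (sin e)^2"
      using sin_e s0 by (simp add: field_simps)
    show ?thesis unfolding a b by (simp add: Cp_def K3_def)
  qed
  finally show ?thesis using eq on_def by simp
qed

end

context plane begin

lemma cutoff:
  assumes f0: "f0 \<in> F"
  shows "\<exists>C. \<forall>N::nat. N \<ge> 1 \<longrightarrow> (\<exists>\<eta> W. finite W \<and> W \<subseteq> V \<and> (\<forall>i. i \<notin> W \<longrightarrow> \<eta> i = 0) \<and>
     (\<forall>i\<in>V. 0 \<le> \<eta> i \<and> \<eta> i \<le> 1) \<and> (\<forall>i\<in>f0. \<eta> i = 1) \<and>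
     (\<Sum>f\<in>{f \<in> F. f \<inter> W \<noteq> {}}. (oscf \<eta> f)^2) \<le> C / N)"
proof -
  define K3 where "K3 = 1 + K1"
  obtain b :: nat where b: "K3 < 2 ^ b" using real_arch_pow[of 2 K3] by auto
  define Rb where "Rb = max R1 (Max ((\<lambda>i. cmod (p i)) ` f0)) + 1"
  have R1Rb: "R1 < Rb" unfolding Rb_def by simp
  have Rb0: "0 < Rb" using R1Rb R0_le_R1 R0_nonneg by linarith
  have f0Rb: "cmod (p i) \<le> Rb" if "i \<in> f0" for i
  proof -
    have "cmod (p i) \<le> Max ((\<lambda>i. cmod (p i)) ` f0)" using that face_finite[OF f0] by (intro Max_ge) auto
    thus ?thesis unfolding Rb_def by linarith
  qed
  define C where "C = real (b + 1) * Cp"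
  show ?thesis
  proof (intro exI[of _ C] allI impI)
    fix N :: nat assume N1: "1 \<le> real N"
    define s where "s = (\<lambda>n::nat. 2 ^ n * Rb)"
    have s_gt: "R1 < s n" for n
    proof -
      have "Rb \<le> 2 ^ n * Rb" using Rb0 by simp
      thus ?thesis using R1Rb unfolding s_def by linarith
    qed
    have s0: "0 < s n" for n unfolding s_def using Rb0 by simp
    define g where "g = (\<lambda>n i. gc (s n) (cmod (p i)))"
    define \<eta> where "\<eta> = (\<lambda>i. if i \<in> V then (\<Sum>n<N. g n i) / N else 0)"
    define W where "W = {i \<in> V. cmod (p i) < 2 ^ N * Rb}"
    define FW where "FW = {f \<in> F. f \<inter> W \<noteq> {}}"
    have Npos: "0 < real N" using N1 by simp
    have finW: "finite W"
    proof -
      have "W \<subseteq> \<Union>{f \<in> F. H f \<inter> cball 0 (2 ^ N * Rb) \<noteq> {}}"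
      proof
        fix i assume i: "i \<in> W"
        then obtain f where f: "f \<in> F" "i \<in> f" using surf unfolding W_def tri_surface_def by blast
        have "p i \<in> H f \<inter> cball 0 (2 ^ N * Rb)" using vert_in_H[OF f(2)] i unfolding W_def by simp
        thus "i \<in> \<Union>{f \<in> F. H f \<inter> cball 0 (2 ^ N * Rb) \<noteq> {}}" using f by blast
      qed
      moreover have "finite (\<Union>{f \<in> F. H f \<inter> cball 0 (2 ^ N * Rb) \<noteq> {}})"
        using geo_lf[of "cball 0 (2 ^ N * Rb)"] face_finite by auto
      ultimately show ?thesis by (rule finite_subset)
    qed
    have WV: "W \<subseteq> V" unfolding W_def by auto
    have eta0: "\<eta> i = 0" if "i \<notin> W" for i
    proof (cases "i \<in> V")
      case False thus ?thesis by (simp add: \<eta>_def)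
    next
      case True
      hence big: "2 ^ N * Rb \<le> cmod (p i)" using that unfolding W_def by simp
      have "g n i = 0" if "n < N" for n
      proof -
        have "(2::real) ^ Suc n \<le> 2 ^ N" using that by (intro power_increasing) auto
        hence "2 * s n \<le> 2 ^ N * Rb" unfolding s_def using Rb0 by simp
        thus ?thesis unfolding g_def using gc_zero[OF s0] big by simp
      qed
      thus ?thesis using True by (simp add: \<eta>_def)
    qed
    have etab: "0 \<le> \<eta> i \<and> \<eta> i \<le> 1" if "i \<in> V" for i
    proof -
      have "0 \<le> (\<Sum>n<N. g n i)" using gc_bounds unfolding g_def by (intro sum_nonneg) auto
      moreover have "(\<Sum>n<N. g n i) \<le> (\<Sum>n<N. 1)" using gc_bounds unfolding g_def by (intro sum_mono) auto
      ultimately show ?thesis using that Npos by (simp add: \<eta>_def field_simps)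
    qed
    have eta1: "\<eta> i = 1" if i: "i \<in> f0" for i
    proof -
      have iV: "i \<in> V" using face_basic[OF f0] i by blast
      have "g n i = 1" for n
      proof -
        have "Rb \<le> s n" unfolding s_def using Rb0 by simp
        thus ?thesis unfolding g_def using gc_one[OF s0] f0Rb[OF i] by simp
      qed
      thus ?thesis using iV Npos by (simp add: \<eta>_def)
    qed
    define on where "on = (\<lambda>n f. oscf (g n) f)"
    have on_nn: "0 \<le> on n f" if "f \<in> F" for n f
      unfolding on_def by (rule oscf_nonneg[OF face_finite[OF that] face_ne[OF that]])
    have fsq: "(oscf \<eta> f)^2 \<le> real (b + 1) / (real N)^2 * (\<Sum>n<N. (on n f)^2)" if fF: "f \<in> F" for f
    proof -
      have fV: "f \<subseteq> V" using face_basic[OF fF] by blast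
      have O1: "oscf \<eta> f \<le> (\<Sum>n<N. on n f) / N"
      proof (rule oscf_le[OF face_finite[OF fF] face_ne[OF fF]])
        fix i j assume ij: "i \<in> f" "j \<in> f"
        have "\<eta> i - \<eta> j = (\<Sum>n<N. g n i - g n j) / N" using ij fV by (auto simp: \<eta>_def sum_subtractf diff_divide_distrib)
        hence "\<bar>\<eta> i - \<eta> j\<bar> = \<bar>\<Sum>n<N. g n i - g n j\<bar> / N" using Npos by (simp add: abs_div)
        also have "\<dots> \<le> (\<Sum>n<N. \<bar>g n i - g n j\<bar>) / N" using Npos by (intro divide_right_mono sum_abs) auto
        also have "\<dots> \<le> (\<Sum>n<N. on n f) / N"
          using Npos ij by (intro divide_right_mono sum_mono) (auto simp: on_def intro: oscf_ge[OF face_finite[OF fF]])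
        finally show "\<bar>\<eta> i - \<eta> j\<bar> \<le> (\<Sum>n<N. on n f) / N" .
      qed
      have O0: "0 \<le> oscf \<eta> f" by (rule oscf_nonneg[OF face_finite[OF fF] face_ne[OF fF]])
      define J where "J = {n \<in> {..<N}. on n f \<noteq> 0}"
      have finJ: "finite J" by (simp add: J_def)
      have O2: "(\<Sum>n<N. on n f) = (\<Sum>n\<in>J. on n f)"
        by (rule sum.mono_neutral_right) (auto simp: J_def)
      have O3: "card J \<le> b + 1"
      proof (cases "J = {}")
        case True thus ?thesis by simp
      next
        case False
        define m where "m = Min J"
        have mJ: "m \<in> J" using finJ False by (simp add: m_def)
        obtain y where y: "y \<in> f" "cmod (p y) < 2 * s m"
          using osc_nz(2)[OF fF s_gt] mJ unfolding J_def on_def g_def by blast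
        have sub: "J \<subseteq> {m..m + b}"
        proof
          fix n assume nJ: "n \<in> J"
          have "m \<le> n" using finJ nJ by (simp add: m_def)
          have nz: "oscf (\<lambda>i. gc (s n) (cmod (p i))) f \<noteq> 0" using nJ unfolding J_def on_def g_def by simp
          obtain x where x: "x \<in> f" "s n < cmod (p x)" using osc_nz(1)[OF fF s_gt nz] by blast
          have all: "\<And>x. x \<in> f \<Longrightarrow> R0 < cmod (p x)" using osc_nz(3)[OF fF s_gt nz] by blast
          have "cmod (p x) \<le> K3 * cmod (p y)" using far_face(2)[OF fF all y(1) x(1)] by (simp add: K3_def)
          also have "\<dots> < K3 * (2 * s m)" using y(2) K1_pos by (simp add: K3_def)
          also have "\<dots> \<le> 2 ^ b * (2 * s m)" using b s0[of m] by (intro mult_right_mono) auto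
          finally have "s n < 2 ^ b * (2 * s m)" using x(2) by simp
          hence "(2::real) ^ n * Rb < 2 ^ (b + m + 1) * Rb" unfolding s_def by (simp add: power_add algebra_simps)
          hence "(2::real) ^ n < 2 ^ (b + m + 1)" using Rb0 by simp
          hence "n < b + m + 1" by (intro power_less_imp_less_exp[of "2::real"]) simp_all
          thus "n \<in> {m..m + b}" using \<open>m \<le> n\<close> by simp
        qed
        have "card J \<le> card {m..m + b}" using sub by (intro card_mono) auto
        thus ?thesis by simp
      qed
      have "(oscf \<eta> f)^2 \<le> ((\<Sum>n\<in>J. on n f) / N)^2" using O1 O0 O2 by (intro power_mono) auto
      also have "\<dots> = (\<Sum>n\<in>J. on n f)^2 / (real N)^2" by (simp add: power_divide)
      also have "\<dots> \<le> ((\<Sum>n\<in>J. (on n f)^2) * real (card J)) / (real N)^2"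
        by (intro divide_right_mono sum_squared_le_sum_of_squares) auto
      also have "\<dots> \<le> ((\<Sum>n<N. (on n f)^2) * real (b + 1)) / (real N)^2"
      proof (intro divide_right_mono mult_mono)
        show "(\<Sum>n\<in>J. (on n f)^2) \<le> (\<Sum>n<N. (on n f)^2)"
          by (rule sum_mono2) (auto simp: J_def)
        show "real (card J) \<le> real (b + 1)" using O3 by simp
      qed (auto intro: sum_nonneg)
      finally show ?thesis by (simp add: field_simps)
    qed
    have finFW: "finite FW"
    proof -
      have "FW \<subseteq> (\<Union>i\<in>W. {f \<in> F. i \<in> f})" unfolding FW_def by auto
      thus ?thesis using finW WV star_fin by (meson finite_UN_I finite_subset subsetD)
    qed
    have FWF: "FW \<subseteq> F" unfolding FW_def by auto
    have "(\<Sum>f\<in>FW. (oscf \<eta> f)^2) \<le> (\<Sum>f\<in>FW. real (b + 1) / (real N)^2 * (\<Sum>n<N. (on n f)^2))"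
      using fsq FWF by (intro sum_mono) auto
    also have "\<dots> = real (b + 1) / (real N)^2 * (\<Sum>n<N. \<Sum>f\<in>FW. (on n f)^2)"
      by (simp add: sum_distrib_left sum.swap[of _ FW])
    also have "\<dots> \<le> real (b + 1) / (real N)^2 * (\<Sum>n<N. Cp)"
    proof (intro mult_left_mono sum_mono)
      fix n assume "n \<in> {..<N}"
      show "(\<Sum>f\<in>FW. (on n f)^2) \<le> Cp"
        using level_bound[OF finFW FWF s_gt[of n]] unfolding on_def g_def by simp
    qed auto
    also have "\<dots> = C / N" using Npos by (simp add: C_def power2_eq_square field_simps)
    finally have "(\<Sum>f\<in>FW. (oscf \<eta> f)^2) \<le> C / N" .
    thus "\<exists>\<eta> W. finite W \<and> W \<subseteq> V \<and> (\<forall>i. i \<notin> W \<longrightarrow> \<eta> i = 0) \<and>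
     (\<forall>i\<in>V. 0 \<le> \<eta> i \<and> \<eta> i \<le> 1) \<and> (\<forall>i\<in>f0. \<eta> i = 1) \<and>
     (\<Sum>f\<in>{f \<in> F. f \<inter> W \<noteq> {}}. (oscf \<eta> f)^2) \<le> C / N"
      using finW WV eta0 etab eta1 unfolding FW_def by blast
  qed
qed

lemma const_faces:
  assumes cf: "\<And>f i j. f \<in> F \<Longrightarrow> i \<in> f \<Longrightarrow> j \<in> f \<Longrightarrow> u i = u j"
  shows "\<exists>c. \<forall>i\<in>V. u i = c"
proof -
  obtain f0 where f0: "f0 \<in> F" using geo_cover by blast
  obtain a0 where a0: "a0 \<in> f0" using face_ne[OF f0] by blast
  define c where "c = u a0"
  define UA where "UA = (\<Union>f\<in>{f \<in> F. \<exists>i\<in>f. u i = c}. H f)"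
  define UB where "UB = (\<Union>f\<in>{f \<in> F. \<not> (\<exists>i\<in>f. u i = c)}. H f)"
  have cA: "closed UA" unfolding UA_def by (rule closed_sub)
  have cB: "closed UB" unfolding UB_def by (rule closed_sub)
  have cov: "UNIV \<subseteq> UA \<union> UB"
  proof
    fix z :: complex
    obtain f where f: "f \<in> F" "z \<in> H f" using geo_cover by blast
    show "z \<in> UA \<union> UB"
    proof (cases "\<exists>i\<in>f. u i = c")
      case True thus ?thesis using f unfolding UA_def by blast
    next
      case False thus ?thesis using f unfolding UB_def by blast
    qed
  qed
  have dis: "UA \<inter> UB \<inter> UNIV = {}"
  proof (rule ccontr)
    assume "UA \<inter> UB \<inter> UNIV \<noteq> {}"
    then obtain z where zA: "z \<in> UA" and zB: "z \<in> UB" by blast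
    obtain f where f: "f \<in> F" "\<exists>i\<in>f. u i = c" "z \<in> H f" using zA unfolding UA_def by blast
    obtain g where g: "g \<in> F" "\<not> (\<exists>i\<in>g. u i = c)" "z \<in> H g" using zB unfolding UB_def by blast
    have "z \<in> H (f \<inter> g)" using geo_int[OF f(1) g(1)] f(3) g(3) by blast
    hence "f \<inter> g \<noteq> {}" by auto
    then obtain i where i: "i \<in> f" "i \<in> g" by blast
    obtain j where j: "j \<in> f" "u j = c" using f(2) by blast
    have "u i = c" using cf[OF f(1) i(1) j(1)] j(2) by simp
    thus False using g(2) i(2) by blast
  qed
  have disj: "UA \<inter> UNIV = {} \<or> UB \<inter> UNIV = {}"
    by (rule connected_closedD[OF connected_UNIV dis cov cA cB])
  have "p a0 \<in> UA" unfolding UA_def c_def using f0 a0 vert_in_H[OF a0] by blast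
  hence UB0: "UB = {}" using disj by auto
  have "u i = c" if i: "i \<in> V" for i
  proof -
    obtain f where f: "f \<in> F" "i \<in> f" using surf i unfolding tri_surface_def by blast
    have "\<exists>j\<in>f. u j = c"
    proof (rule ccontr)
      assume "\<not> ?thesis"
      hence "f \<in> {f \<in> F. \<not> (\<exists>i\<in>f. u i = c)}" using f(1) by blast
      hence "p i \<in> UB" unfolding UB_def using vert_in_H[OF f(2)] by blast
      thus False using UB0 by simp
    qed
    then obtain j where "j \<in> f" "u j = c" by blast
    thus ?thesis using cf[OF f(1) f(2)] by metis
  qed
  thus ?thesis by blast
qed

end

theorem proposition3p3:
  fixes V :: "'v set" and F :: "'v set set" and p :: "'v \<Rightarrow> complex" and u :: "'v \<Rightarrow> real"
  assumes "tri_surface V F"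
    and "geodesic_homeo V F p"
    and "unif_nondegenerate F p"
    and "delaunay F p"
    and "bounded (u ` V)"
    and "\<forall>i\<in>V. (\<Sum>j\<in>nbrs F i. cot_weight F p i j * (u j - u i)) = 0"
  shows "\<exists>c. \<forall>i\<in>V. u i = c"
proof -
  obtain \<epsilon> where eps: "\<epsilon> > 0" "\<And>i j k. {i, j, k} \<in> F \<and> card {i, j, k} = 3 \<Longrightarrow> theta p i j k \<ge> \<epsilon>"
    using assms(3) unfolding unif_nondegenerate_def by blast
  define e where "e = min \<epsilon> 1"
  have e: "0 < e" "e \<le> pi / 2" using eps(1) pi_gt3 by (auto simp: e_def)
  interpret plane V F p e
  proof
    show "tri_surface V F" "geodesic_homeo V F p" "0 < e" "e \<le> pi / 2" using assms(1,2) e by auto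
    fix i j k assume "{i, j, k} \<in> F" "card {i, j, k} = 3"
    hence "\<epsilon> \<le> theta p i j k" using eps(2) by blast
    thus "e \<le> theta p i j k" by (simp add: e_def)
  qed
  obtain M where M: "\<And>i. i \<in> V \<Longrightarrow> \<bar>u i\<bar> \<le> M"
    using assms(5) unfolding bounded_iff by auto
  have harm: "\<And>i. i \<in> V \<Longrightarrow> Lap u i = 0" using assms(6) by (simp add: Lap_def)
  have B0: "Bf p f u u = 0" if f: "f \<in> F" for f
  proof -
    obtain C where C: "\<forall>N::nat. 1 \<le> real N \<longrightarrow> (\<exists>\<eta> W. finite W \<and> W \<subseteq> V \<and> (\<forall>i. i \<notin> W \<longrightarrow> \<eta> i = 0) \<and>
       (\<forall>i\<in>V. 0 \<le> \<eta> i \<and> \<eta> i \<le> 1) \<and> (\<forall>i\<in>f. \<eta> i = 1) \<and>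
       (\<Sum>f\<in>{f \<in> F. f \<inter> W \<noteq> {}}. (oscf \<eta> f)^2) \<le> C / N)"
      using cutoff[OF f] by blast
    define K where "K = 6 * (16 / sin e) * M^2 * C"
    have K0: "0 \<le> 6 * (16 / sin e) * M^2" using sin_e by simp
    have bnd: "Bf p f u u \<le> K / real N" if N: "1 \<le> real N" for N :: nat
    proof -
      obtain \<eta> W where eW: "finite W" "W \<subseteq> V" "\<forall>i. i \<notin> W \<longrightarrow> \<eta> i = 0"
        "\<forall>i\<in>V. 0 \<le> \<eta> i \<and> \<eta> i \<le> 1" "\<forall>i\<in>f. \<eta> i = 1"
        "(\<Sum>f\<in>{f \<in> F. f \<inter> W \<noteq> {}}. (oscf \<eta> f)^2) \<le> C / N"
        using mp[OF spec[OF C, of N] N] by (elim exE conjE) (rule that; assumption)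
      have "Bf p f u u \<le> 6 * (16 / sin e) * M^2 * (\<Sum>f\<in>{f \<in> F. f \<inter> W \<noteq> {}}. (oscf \<eta> f)^2)"
        by (rule main_est[OF eW(1,2) _ _ harm M f]) (use eW(3-5) in auto)
      also have "\<dots> \<le> 6 * (16 / sin e) * M^2 * (C / N)" using eW(6) K0 by (rule mult_left_mono)
      finally show ?thesis by (simp add: K_def)
    qed
    have nn: "0 \<le> Bf p f u u" by (rule Bf_props(1)[OF f])
    show ?thesis
    proof (rule ccontr)
      assume "Bf p f u u \<noteq> 0"
      hence pos: "0 < Bf p f u u" using nn by simp
      obtain N :: nat where N: "max 1 (K / Bf p f u u) < real N" using reals_Archimedean2 by blast
      have N1: "1 \<le> real N" using N by simp
      have "K / Bf p f u u < real N" using N by simp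
      hence "K < real N * Bf p f u u" using pos by (simp add: field_simps)
      hence "K / real N < Bf p f u u" using N1 by (simp add: field_simps)
      thus False using bnd[OF N1] by simp
    qed
  qed
  have "\<And>f i j. f \<in> F \<Longrightarrow> i \<in> f \<Longrightarrow> j \<in> f \<Longrightarrow> u i = u j"
    using Bf_props(4) B0 by blast
  thus ?thesis by (rule const_faces)
qed


end
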